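(* Let $\mu$ be a probability measure, equip $L^1(\mu)$ with the Luxemburg norm $\|\cdot\|$ associated to the Orlicz function $M$ (defined in the context), and let $X\subset L^1(\mu)$ be a closed subspace such that $G_X(t)=O(1/t^{p-1})$ as $t\to+\infty$ for some $p>1$. Then, as $\tau\to 0^+$: (1) $\rho_X(\tau)=O(\tau^2)$ if $p>2$; (2) $\rho_X(\tau)=O(\tau^p)$ if $1<p<2$; (3) $\rho_X(\tau)=O(\tau^2|\log\tau|)$ if $p=2$.
   Context: Let $\varphi(t)=2$ for $0\le t\le 1$ and $\varphi(t)=8/(1+t)^2$ for $t>1$, and let $M(t)=\int_0^{|t|}\varphi(u)(|t|-u)\,du$ for $t\in\mathbb{R}$. The Luxemburg norm is $\|f\|=\inf\{\lambda>0:\int_\Omega M(f/\lambda)\,d\mu\le 1\}$. For $f\in L^1(\mu)$ let $F_f(t)=\mu(\{|f|>t\})$, and for a subspace $X$ let $G_X(t)=\sup\{\int_t^{\infty}F_f(u)\,du : f\in X,\ \|f\|_1=1\}$, $t>0$. The modulus of smoothness of $(X,\|\cdot\|)$ is $\rho_X(\tau)=\sup\{\tfrac{\|x+\tau y\|+\|x-\tau y\|}{2}-1 : x,y\in X,\ \|x\|=\|y\|=1\}$. *)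

theory Defs
  imports "HOL-Analysis.Analysis" "HOL-Probability.Probability"
begin

definition orl_phi :: "real \<Rightarrow> real" where
  "orl_phi t = (if t \<le> 1 then 2 else 8 / (1 + t)\<^sup>2)"

definition orl_M :: "real \<Rightarrow> real" where
  "orl_M t = integral {0..\<bar>t\<bar>} (\<lambda>u. orl_phi u * (\<bar>t\<bar> - u))"

definition lux_norm :: "'a measure \<Rightarrow> ('a \<Rightarrow> real) \<Rightarrow> real" where
  "lux_norm mu f = Inf {l::real. l > 0 \<and>
       (\<integral>\<^sup>+ x. ennreal (orl_M (f x / l)) \<partial>mu) \<le> 1}"

definition L1_norm :: "'a measure \<Rightarrow> ('a \<Rightarrow> real) \<Rightarrow> real" where
  "L1_norm mu f = (\<integral>x. \<bar>f x\<bar> \<partial>mu)"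

definition distr_fun :: "'a measure \<Rightarrow> ('a \<Rightarrow> real) \<Rightarrow> real \<Rightarrow> real" where
  "distr_fun mu f t = measure mu {x \<in> space mu. \<bar>f x\<bar> > t}"

definition G_fun :: "'a measure \<Rightarrow> ('a \<Rightarrow> real) set \<Rightarrow> real \<Rightarrow> ennreal" where
  "G_fun mu X t = (SUP f \<in> {f \<in> X. L1_norm mu f = 1}.
       (\<integral>\<^sup>+ u. indicator {t..} u * ennreal (distr_fun mu f u) \<partial>lborel))"

text \<open>Modulus of smoothness of X with the Luxemburg norm (sup of the empty set is -\<infinity>).\<close>
definition rho_mod :: "'a measure \<Rightarrow> ('a \<Rightarrow> real) set \<Rightarrow> real \<Rightarrow> ereal" where
  "rho_mod mu X \<tau> = Sup {ereal ((lux_norm mu (\<lambda>w. x w + \<tau> * y w)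
        + lux_norm mu (\<lambda>w. x w - \<tau> * y w)) / 2 - 1) | x y.
        x \<in> X \<and> y \<in> X \<and> lux_norm mu x = 1 \<and> lux_norm mu y = 1}"

definition closed_L1_subspace :: "'a measure \<Rightarrow> ('a \<Rightarrow> real) set \<Rightarrow> bool" where
  "closed_L1_subspace mu X \<longleftrightarrow>
     X \<subseteq> {f. integrable mu f} \<and> (\<lambda>_. 0) \<in> X \<and>
     (\<forall>f\<in>X. \<forall>g\<in>X. (\<lambda>w. f w + g w) \<in> X) \<and>
     (\<forall>f\<in>X. \<forall>c::real. (\<lambda>w. c * f w) \<in> X) \<and>
     (\<forall>fs f. (\<forall>n. fs n \<in> X) \<longrightarrow> integrable mu f \<longrightarrow>
        ((\<lambda>n. L1_norm mu (\<lambda>w. fs n w - f w)) \<longlonglongrightarrow> 0) \<longrightarrow> f \<in> X)"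

end

theory Submission
  imports Defs "HOL-Real_Asymp.Real_Asymp"
begin


lemma orl_int_small:
  assumes "0 \<le> a" "a \<le> 1"
  shows "integral {0..a} (\<lambda>u. orl_phi u * (a - u)) = a\<^sup>2"
proof -
  have "((\<lambda>u. 2 * (a - u)) has_integral ((\<lambda>u. 2*a*u - u\<^sup>2) a - (\<lambda>u. 2*a*u - u\<^sup>2) 0)) {0..a}"
    apply (rule fundamental_theorem_of_calculus)
     apply (simp add: assms)
    unfolding has_real_derivative_iff_has_vector_derivative[symmetric]
    by (auto intro!: derivative_eq_intros)
  then have "((\<lambda>u. 2 * (a - u)) has_integral a\<^sup>2) {0..a}" by (simp add: power2_eq_square)
  then have "((\<lambda>u. orl_phi u * (a - u)) has_integral a\<^sup>2) {0..a}"
    apply (rule has_integral_eq[rotated])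
    using assms by (auto simp: orl_phi_def power2_eq_square algebra_simps)
  then show ?thesis by (rule integral_unique)
qed

lemma a1: "(w::real) \<noteq> 0 \<Longrightarrow> (8 * a + 8) / (w * w) - 8 / w = (8 * a + 8 - 8 * w) / w\<^sup>2"
  by (simp add: power2_eq_square diff_divide_distrib)
lemma Fderiv_aux: "1 \<le> (x::real) \<and> x \<le> a \<Longrightarrow> (8 * a + 8) / ((1 + x) * (1 + x)) - 8 / (1 + x) = (8 * a - 8 * x) / (1 + x)\<^sup>2"
  using a1[of "1+x" a] by (simp add: algebra_simps)

lemma orl_int_large:
  assumes "1 < a"
  shows "integral {0..a} (\<lambda>u. orl_phi u * (a - u)) = 6*a - 5 - 8 * ln ((1+a)/2)"
proof -
  have h1: "((\<lambda>u. orl_phi u * (a - u)) has_integral (2*a - 1)) {0..1}"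
  proof -
    have "((\<lambda>u. 2 * (a - u)) has_integral ((\<lambda>u. 2*a*u - u\<^sup>2) 1 - (\<lambda>u. 2*a*u - u\<^sup>2) 0)) {0..1}"
      apply (rule fundamental_theorem_of_calculus)
       apply simp
      unfolding has_real_derivative_iff_has_vector_derivative[symmetric]
      by (auto intro!: derivative_eq_intros)
    then have "((\<lambda>u. 2 * (a - u)) has_integral (2*a-1)) {0..1}" by simp
    then show ?thesis
      apply (rule has_integral_eq[rotated])
      by (auto simp: orl_phi_def power2_eq_square algebra_simps)
  qed
  define F where "F u = - 8 * (1+a) / (1+u) - 8 * ln (1+u)" for u
  have h2: "((\<lambda>u. orl_phi u * (a - u)) has_integral (F a - F 1)) {1..a}"
  proof -
    have "((\<lambda>u. 8 * (a - u) / (1+u)\<^sup>2) has_integral (F a - F 1)) {1..a}"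
      apply (rule fundamental_theorem_of_calculus)
      using assms apply simp
      unfolding has_real_derivative_iff_has_vector_derivative[symmetric] F_def
      apply (rule derivative_eq_intros refl | simp)+
      by (rule Fderiv_aux)
    then show ?thesis
      apply (rule has_integral_eq[rotated])
      apply (case_tac "x \<le> 1")
      by (auto simp: orl_phi_def)
  qed
  have "((\<lambda>u. orl_phi u * (a - u)) has_integral (2*a - 1 + (F a - F 1))) {0..a}"
    by (rule has_integral_combine[OF _ _ h1 h2]) (use assms in auto)
  moreover have "2*a - 1 + (F a - F 1) = 6*a - 5 - 8 * ln ((1+a)/2)"
    using assms by (simp add: F_def ln_div field_simps)
  ultimately show ?thesis using integral_unique by metis
qed

definition Mc :: "real \<Rightarrow> real" where
  "Mc t = (if t < -1 then -6*t - 5 - 8*ln((1-t)/2) else if t \<le> 1 then t\<^sup>2 else 6*t - 5 - 8*ln((1+t)/2))"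

definition Dc :: "real \<Rightarrow> real" where
  "Dc t = (if t < -1 then -6 + 8/(1-t) else if t \<le> 1 then 2*t else 6 - 8/(1+t))"

lemma orl_M_Mc: "orl_M t = Mc t"
proof (cases "\<bar>t\<bar> \<le> 1")
  case True
  then show ?thesis unfolding orl_M_def Mc_def
    using orl_int_small[of "\<bar>t\<bar>"] by auto
next
  case False
  then show ?thesis unfolding orl_M_def Mc_def
    using orl_int_large[of "\<bar>t\<bar>"] by (auto simp: abs_if)
qed


lemma deriv_split:
  assumes "(f has_real_derivative D) (at x within {..x})"
      and "(f has_real_derivative D) (at x within {x..})"
  shows "(f has_real_derivative D) (at x)"
proof -
  have "((\<lambda>y. (f y - f x) / (y - x)) \<longlongrightarrow> D) (at x within ({..x} \<union> {x..}))"
    using assms unfolding has_field_derivative_iff by (intro Lim_Un)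
  moreover have "{..x} \<union> {x..} = UNIV" by auto
  ultimately show ?thesis unfolding has_field_derivative_iff by simp
qed

lemma deriv_right_formula: "t > -1 \<Longrightarrow> ((\<lambda>t. 6*t - 5 - 8*ln((1+t)/2)) has_real_derivative (6 - 8/(1+t))) (at t within S)"
  apply (rule derivative_eq_intros refl | simp)+
  by (simp add: field_simps)

lemma deriv_left_formula: "t < 1 \<Longrightarrow> ((\<lambda>t. -6*t - 5 - 8*ln((1-t)/2)) has_real_derivative (-6 + 8/(1-t))) (at t within S)"
  apply (rule derivative_eq_intros refl | simp)+
  by (simp add: field_simps)

lemma deriv_sq: "((\<lambda>t. t\<^sup>2) has_real_derivative (2*t)) (at t within S)"
  by (auto intro!: derivative_eq_intros)

lemma Mc_deriv: "(Mc has_real_derivative Dc t) (at t)"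
proof -
  consider "t < -1" | "t = -1" | "-1 < t \<and> t < 1" | "t = 1" | "t > 1" by linarith
  then show ?thesis
  proof cases
    case 1
    then have e: "Dc t = -6 + 8/(1-t)" by (simp add: Dc_def)
    show ?thesis unfolding e
      apply (rule has_field_derivative_transform_within_open[where S="{..< -1}" and f="\<lambda>t. -6*t - 5 - 8*ln((1-t)/2)"])
      apply (rule deriv_left_formula) using 1 by (auto simp: Mc_def)
  next
    case 3
    then have e: "Dc t = 2*t" by (simp add: Dc_def)
    show ?thesis unfolding e
      apply (rule has_field_derivative_transform_within_open[where S="{-1<..<1}" and f="\<lambda>t. t\<^sup>2"])
      apply (rule deriv_sq) using 3 by (auto simp: Mc_def)
  next
    case 5
    then have e: "Dc t = 6 - 8/(1+t)" by (simp add: Dc_def)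
    show ?thesis unfolding e
      apply (rule has_field_derivative_transform_within_open[where S="{1<..}" and f="\<lambda>t. 6*t - 5 - 8*ln((1+t)/2)"])
      apply (rule deriv_right_formula) using 5 by (auto simp: Mc_def)
  next
    case 4
    have e1: "Dc t = 2*t" and e2: "Dc t = 6 - 8/(1+t)" using 4 by (auto simp: Dc_def)
    show ?thesis
      apply (rule deriv_split)
      apply (subst e1)
      apply (rule has_field_derivative_transform_within[where d=1 and f="\<lambda>t. t\<^sup>2"])
      apply (rule deriv_sq) using 4 apply (auto simp: Mc_def dist_real_def)[3]
      apply (subst e2)
      apply (rule has_field_derivative_transform_within[where d=1 and f="\<lambda>t. 6*t - 5 - 8*ln((1+t)/2)"])
      apply (rule deriv_right_formula) using 4 apply (auto simp: Mc_def dist_real_def)[3]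
      subgoal for x using 4 by (cases "x = 1") (auto simp: Mc_def)
      done
  next
    case 2
    have e1: "Dc t = 2*t" and e2: "Dc t = -6 + 8/(1-t)" using 2 by (auto simp: Dc_def)
    show ?thesis
      apply (rule deriv_split)
      apply (subst e2)
      apply (rule has_field_derivative_transform_within[where d=1 and f="\<lambda>t. -6*t - 5 - 8*ln((1-t)/2)"])
      apply (rule deriv_left_formula) using 2 apply (auto simp: Mc_def dist_real_def)[3]
      subgoal for x using 2 by (cases "x = -1") (auto simp: Mc_def)
      apply (subst e1)
      apply (rule has_field_derivative_transform_within[where d=1 and f="\<lambda>t. t\<^sup>2"])
      apply (rule deriv_sq) using 2 apply (auto simp: Mc_def dist_real_def)[3]
      done
  qed
qed


lemma Dc_bound: "\<bar>Dc t\<bar> \<le> 6"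
proof -
  have "t > 1 \<Longrightarrow> 8/(1+t) \<le> 8" by (simp add: field_simps)
  moreover have "t < -1 \<Longrightarrow> 8/(1-t) \<le> 8" by (simp add: field_simps)
  ultimately show ?thesis unfolding Dc_def by (auto simp: abs_if)
qed

lemma Dc_zero[simp]: "Dc 0 = 0" by (simp add: Dc_def)
lemma Mc_zero[simp]: "Mc 0 = 0" by (simp add: Mc_def)
lemma Mc_small: "\<bar>t\<bar> \<le> 1 \<Longrightarrow> Mc t = t\<^sup>2" by (auto simp: Mc_def)

lemma Dc_lip:
  assumes "s \<le> t" shows "Dc s \<le> Dc t \<and> Dc t - Dc s \<le> 2*(t-s)"
proof -
  have r1: "8/(1+x) - 8/(1+y) \<le> 2*(y - x) \<and> 8/(1+y) \<le> 8/(1+x)" if "1 \<le> x" "x \<le> y" for x y :: real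
  proof -
    have "8/(1+x) - 8/(1+y) = 8*(y-x)/((1+x)*(1+y))" using that by (simp add: field_simps)
    also have "\<dots> \<le> 8*(y-x)/4"
      apply (rule divide_left_mono) using that mult_mono[of 2 "1+x" 2 "1+y"] by auto
    finally have "8/(1+x) - 8/(1+y) \<le> 2*(y - x)" by simp
    moreover have "8/(1+y) \<le> 8/(1+x)" using that by (intro divide_left_mono) auto
    ultimately show ?thesis by simp
  qed
  have r2: "6 - 8/(1+y) \<le> 2*y \<and> 2 \<le> 6 - 8/(1+y)" if "1 \<le> y" for y :: real
  proof -
    have h: "0 \<le> (y-1)*(y-1)" by simp
    have "6*(1+y) - 8 \<le> 2*y*(1+y)" using h by (auto simp: algebra_simps)
    moreover have "8 \<le> 4*(1+y)" using that by simp
    ultimately show ?thesis using that by (simp add: field_simps)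
  qed
  consider "t < -1" | "s < -1 \<and> -1 \<le> t \<and> t \<le> 1" | "s < -1 \<and> 1 < t" | "-1 \<le> s \<and> t \<le> 1"
    | "-1 \<le> s \<and> s \<le> 1 \<and> 1 < t" | "1 < s" using assms by linarith
  then show ?thesis
  proof cases
    case 1
    with r1[of "-t" "-s"] assms show ?thesis by (simp add: Dc_def)
  next
    case 2
    with r2[of "-s"] show ?thesis by (simp add: Dc_def)
  next
    case 3
    with r2[of "-s"] r2[of t] show ?thesis by (simp add: Dc_def)
  next
    case 4
    then show ?thesis using assms by (simp add: Dc_def)
  next
    case 5
    with r2[of t] show ?thesis by (simp add: Dc_def)
  next
    case 6
    with r1[of s t] assms show ?thesis by (simp add: Dc_def)
  qed
qed

lemma sign_lemma:
  fixes f :: "real \<Rightarrow> real"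
  assumes d: "\<And>s. (f has_real_derivative f' s) (at s)" and z: "f 0 = 0"
    and p: "\<And>s. s \<ge> 0 \<Longrightarrow> f' s \<le> 0" and n: "\<And>s. s \<le> 0 \<Longrightarrow> f' s \<ge> 0"
  shows "f b \<le> 0"
proof (cases "b \<ge> 0")
  case True
  have "f b \<le> f 0"
    by (rule DERIV_nonpos_imp_nonincreasing[OF True]) (use d p in blast)
  then show ?thesis using z by simp
next
  case False
  have "f b \<le> f 0"
    by (rule DERIV_nonneg_imp_nondecreasing) (use False d n in auto)
  then show ?thesis using z by simp
qed

lemma Mc_taylor_sq: "Mc (a+b) - Mc a - Dc a * b \<le> b\<^sup>2"
proof -
  have "(\<lambda>s. Mc (a+s) - Mc a - Dc a * s - s\<^sup>2) b \<le> 0"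
  proof (rule sign_lemma[where f = "\<lambda>s. Mc (a+s) - Mc a - Dc a * s - s\<^sup>2" and f' = "\<lambda>s. Dc (a+s) - Dc a - 2 * s"])
    fix s
    show "((\<lambda>s. Mc (a+s) - Mc a - Dc a * s - s\<^sup>2) has_real_derivative Dc (a+s) - Dc a - 2 * s) (at s)"
      by (rule derivative_eq_intros DERIV_chain2[OF Mc_deriv] refl | simp)+
    show "s \<ge> 0 \<Longrightarrow> Dc (a+s) - Dc a - 2 * s \<le> 0" using Dc_lip[of a "a+s"] by simp
    show "s \<le> 0 \<Longrightarrow> Dc (a+s) - Dc a - 2 * s \<ge> 0" using Dc_lip[of "a+s" a] by simp
  qed simp
  then show ?thesis by simp
qed

lemma Mc_convex: "Mc a + Dc a * b \<le> Mc (a+b)"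
proof -
  have "(\<lambda>s. Mc a + Dc a * s - Mc (a+s)) b \<le> 0"
  proof (rule sign_lemma[where f = "\<lambda>s. Mc a + Dc a * s - Mc (a+s)" and f' = "\<lambda>s. Dc a - Dc (a+s)"])
    fix s
    show "((\<lambda>s. Mc a + Dc a * s - Mc (a+s)) has_real_derivative Dc a - Dc (a+s)) (at s)"
      by (rule derivative_eq_intros DERIV_chain2[OF Mc_deriv] refl | simp)+
    show "s \<ge> 0 \<Longrightarrow> Dc a - Dc (a+s) \<le> 0" using Dc_lip[of a "a+s"] by simp
    show "s \<le> 0 \<Longrightarrow> Dc a - Dc (a+s) \<ge> 0" using Dc_lip[of "a+s" a] by simp
  qed simp
  then show ?thesis by simp
qed

lemma Mc_lip_aux: "0 \<le> b \<Longrightarrow> Mc (a+b) - Mc a \<le> 6*b \<and> Mc a - Mc (a+b) \<le> 6*b"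
proof -
  assume b: "0 \<le> b"
  have d: "\<And>s. ((\<lambda>s. Mc (a+s) - 6 * s) has_real_derivative Dc (a+s) - 6) (at s)"
    by (rule derivative_eq_intros DERIV_chain2[OF Mc_deriv] refl | simp)+
  have d2: "\<And>s. ((\<lambda>s. Mc (a+s) + 6 * s) has_real_derivative Dc (a+s) + 6) (at s)"
    by (rule derivative_eq_intros DERIV_chain2[OF Mc_deriv] refl | simp)+
  have "(\<lambda>s. Mc (a+s) - 6 * s) b \<le> (\<lambda>s. Mc (a+s) - 6 * s) 0"
  proof (rule DERIV_nonpos_imp_nonincreasing[OF b, where f = "\<lambda>s. Mc (a+s) - 6 * s"])
    fix x show "\<exists>y. ((\<lambda>s. Mc (a+s) - 6 * s) has_real_derivative y) (at x) \<and> y \<le> 0"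
      using d[of x] Dc_bound[of "a+x"] by auto
  qed
  moreover have "(\<lambda>s. Mc (a+s) + 6 * s) 0 \<le> (\<lambda>s. Mc (a+s) + 6 * s) b"
  proof (rule DERIV_nonneg_imp_nondecreasing[OF b, where f = "\<lambda>s. Mc (a+s) + 6 * s"])
    fix x show "\<exists>y. ((\<lambda>s. Mc (a+s) + 6 * s) has_real_derivative y) (at x) \<and> y \<ge> 0"
      using d2[of x] Dc_bound[of "a+x"] by auto
  qed
  ultimately show ?thesis by simp
qed

lemma Mc_lip: "\<bar>Mc u - Mc v\<bar> \<le> 6 * \<bar>u - v\<bar>"
proof (cases "v \<le> u")
  case True
  then show ?thesis using Mc_lip_aux[of "u - v" v] by auto
next
  case False
  then show ?thesis using Mc_lip_aux[of "v - u" u] by auto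
qed

definition qf :: "real \<Rightarrow> real" where "qf b = 12 * min (b\<^sup>2) \<bar>b\<bar>"

lemma Mc_taylor: "Mc (a+b) \<le> Mc a + Dc a * b + qf b"
proof -
  have "Mc (a+b) - Mc a - Dc a * b \<le> 12 * b\<^sup>2" using Mc_taylor_sq[of a b] zero_le_power2[of b] by linarith
  moreover have "Mc (a+b) - Mc a - Dc a * b \<le> 12 * \<bar>b\<bar>"
  proof -
    have "Mc (a+b) - Mc a \<le> 6 * \<bar>b\<bar>" using Mc_lip[of "a+b" a] by simp
    moreover have "\<bar>Dc a * b\<bar> \<le> 6 * \<bar>b\<bar>"
      using Dc_bound[of a] by (simp add: abs_mult mult_right_mono)
    then have "- (Dc a * b) \<le> 6 * \<bar>b\<bar>" by linarith
    ultimately show ?thesis by simp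
  qed
  ultimately show ?thesis unfolding qf_def by (simp add: min_def)
qed

lemma Mc_nonneg: "0 \<le> Mc t" using Mc_convex[of 0 t] by simp

lemma Mc_even: "Mc (-t) = Mc t" by (simp add: Mc_def)

lemma Mc_mono_pos: "0 \<le> s \<Longrightarrow> s \<le> t \<Longrightarrow> Mc s \<le> Mc t"
proof -
  assume a: "0 \<le> s" "s \<le> t"
  have "0 \<le> Dc s" using Dc_lip[of 0 s] a by simp
  then have "0 \<le> Dc s * (t - s)" using a by simp
  then show ?thesis using Mc_convex[of s "t - s"] by simp
qed

lemma Mc_mono: "\<bar>s\<bar> \<le> \<bar>t\<bar> \<Longrightarrow> Mc s \<le> Mc t"
proof -
  assume "\<bar>s\<bar> \<le> \<bar>t\<bar>"
  then have "Mc \<bar>s\<bar> \<le> Mc \<bar>t\<bar>" using Mc_mono_pos[of "\<bar>s\<bar>" "\<bar>t\<bar>"] by simp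
  moreover have "Mc \<bar>x\<bar> = Mc x" for x by (cases "x \<ge> 0") (auto simp: Mc_even)
  ultimately show ?thesis by simp
qed

lemma Mc_le_lin: "Mc t \<le> 6 * \<bar>t\<bar>" using Mc_lip[of t 0] by simp

lemma Mc_ge_lin: "2 * \<bar>t\<bar> - 1 \<le> Mc t"
proof -
  have "Mc 1 + Dc 1 * (t - 1) \<le> Mc t" using Mc_convex[of 1 "t - 1"] by simp
  moreover have "Mc (-1) + Dc (-1) * (t + 1) \<le> Mc t" using Mc_convex[of "-1" "t + 1"] by simp
  moreover have "Mc 1 = 1" "Mc (-1) = 1" "Dc 1 = 2" "Dc (-1) = -2" by (auto simp: Mc_def Dc_def)
  ultimately show ?thesis by (auto simp: abs_if)
qed

lemma Mc_le_Dc: "Mc a \<le> Dc a * a" using Mc_convex[of a "-a"] by simp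

lemma Mc_double: "Mc (2*t) \<le> 48 * Mc t"
proof -
  consider "\<bar>t\<bar> \<le> 1/2" | "1/2 < \<bar>t\<bar> \<and> \<bar>t\<bar> \<le> 1" | "1 < \<bar>t\<bar>" by linarith
  then show ?thesis
  proof cases
    case 1
    then show ?thesis using Mc_small[of t] Mc_small[of "2*t"] by (simp add: power2_eq_square)
  next
    case 2
    have "Mc (2*t) \<le> 12 * \<bar>t\<bar>" using Mc_le_lin[of "2*t"] by simp
    also have "\<dots> \<le> 48 * (\<bar>t\<bar> * \<bar>t\<bar>)"
    proof -
      have "12 * \<bar>t\<bar> \<le> (48 * \<bar>t\<bar>) * \<bar>t\<bar>" using 2 mult_right_mono[of 12 "48 * \<bar>t\<bar>" "\<bar>t\<bar>"] by simp
      then show ?thesis by simp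
    qed
    also have "\<dots> = 48 * t\<^sup>2" by (simp add: power2_eq_square)
    finally show ?thesis using Mc_small[of t] 2 by simp
  next
    case 3
    have "Mc (2*t) \<le> 12 * \<bar>t\<bar>" using Mc_le_lin[of "2*t"] by simp
    then show ?thesis using Mc_ge_lin[of t] 3 by simp
  qed
qed

lemma Mc_cont: "continuous_on UNIV Mc"
  using Mc_deriv by (meson DERIV_isCont continuous_at_imp_continuous_on)




lemma Mc_borel[measurable]: "Mc \<in> borel_measurable borel"
  by (rule borel_measurable_continuous_onI[OF Mc_cont])

lemma Dc_mono: "mono Dc" unfolding mono_def using Dc_lip by blast

lemma Dc_borel[measurable]: "Dc \<in> borel_measurable borel"
  by (rule borel_measurable_mono[OF Dc_mono])

lemma qf_cont: "continuous_on UNIV qf"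
  unfolding qf_def by (intro continuous_intros)

lemma qf_borel[measurable]: "qf \<in> borel_measurable borel"
  by (rule borel_measurable_continuous_onI[OF qf_cont])

lemma qf_nonneg: "0 \<le> qf b" unfolding qf_def by simp

lemma qf_le: "qf b \<le> 12 * \<bar>b\<bar>" unfolding qf_def by simp

lemma qf_abs: "qf \<bar>b\<bar> = qf b" unfolding qf_def by simp

lemma qf_mono: assumes "\<bar>a\<bar> \<le> \<bar>b\<bar>" shows "qf a \<le> qf b"
proof -
  have "a\<^sup>2 \<le> b\<^sup>2" using assms by (metis abs_ge_zero power2_abs power_mono)
  then show ?thesis using assms unfolding qf_def by (simp add: min_def)
qed

lemma qf_scale: assumes "1 \<le> c" shows "qf (c * b) \<le> c\<^sup>2 * qf b"
proof (cases "b\<^sup>2 \<le> \<bar>b\<bar>")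
  case True
  have "min ((c*b)\<^sup>2) \<bar>c*b\<bar> \<le> (c*b)\<^sup>2" by simp
  also have "\<dots> = c\<^sup>2 * min (b\<^sup>2) \<bar>b\<bar>" using True by (simp add: min_def power_mult_distrib)
  finally show ?thesis unfolding qf_def by simp
next
  case False
  have "min ((c*b)\<^sup>2) \<bar>c*b\<bar> \<le> c * \<bar>b\<bar>" using assms by (simp add: abs_mult)
  also have "\<dots> \<le> c\<^sup>2 * \<bar>b\<bar>" using assms by (simp add: mult_right_mono power2_eq_square)
  also have "\<dots> = c\<^sup>2 * min (b\<^sup>2) \<bar>b\<bar>" using False by (simp add: min_def)
  finally show ?thesis unfolding qf_def by simp
qed

lemma qf_sum_bound:
  assumes "\<bar>k\<bar> \<le> 2 * \<bar>u\<bar> + 2 * \<bar>v\<bar>"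
  shows "qf k \<le> 16 * (qf u + qf v)"
proof -
  define m where "m = max \<bar>u\<bar> \<bar>v\<bar>"
  have "\<bar>k\<bar> \<le> \<bar>4 * m\<bar>" using assms unfolding m_def by auto
  then have "qf k \<le> qf (4 * m)" by (rule qf_mono)
  also have "\<dots> \<le> 4\<^sup>2 * qf m" by (rule qf_scale) simp
  also have "qf m \<le> qf u + qf v"
    unfolding m_def using qf_abs[of u] qf_abs[of v] qf_nonneg[of u] qf_nonneg[of v]
    by (auto simp: max_def)
  finally show ?thesis by (simp add: algebra_simps)
qed

definition Imod :: "'a measure \<Rightarrow> ('a \<Rightarrow> real) \<Rightarrow> real" where
  "Imod mu f = (\<integral>w. Mc (f w) \<partial>mu)"

lemma integrable_bounded_comp:
  fixes f :: "'a \<Rightarrow> real" and h :: "real \<Rightarrow> real"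
  assumes "integrable mu f" "h \<in> borel_measurable borel" "\<And>t. \<bar>h t\<bar> \<le> c * \<bar>t\<bar>"
  shows "integrable mu (\<lambda>w. h (f w))"
proof (rule Bochner_Integration.integrable_bound[where f="\<lambda>w. c * f w"])
  show "integrable mu (\<lambda>w. c * f w)" using assms(1) by simp
  show "(\<lambda>w. h (f w)) \<in> borel_measurable mu" using assms(1,2) by measurable
  show "AE w in mu. norm (h (f w)) \<le> norm (c * f w)"
  proof (intro always_eventually allI)
    fix w
    have "\<bar>h (f w)\<bar> \<le> c * \<bar>f w\<bar>" by (rule assms(3))
    also have "\<dots> \<le> \<bar>c\<bar> * \<bar>f w\<bar>" by (simp add: mult_right_mono)
    finally show "norm (h (f w)) \<le> norm (c * f w)" by (simp add: abs_mult)
  qed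
qed

lemma integrable_Mc: "integrable mu f \<Longrightarrow> integrable mu (\<lambda>w. Mc (f w))"
  by (rule integrable_bounded_comp[where c=6]) (use Mc_le_lin Mc_nonneg in auto)

lemma integrable_qf: "integrable mu f \<Longrightarrow> integrable mu (\<lambda>w. qf (f w))"
  by (rule integrable_bounded_comp[where c=12]) (use qf_le qf_nonneg in auto)

lemma integrable_Dc_mult: "integrable mu f \<Longrightarrow> g \<in> borel_measurable mu \<Longrightarrow> integrable mu (\<lambda>w. Dc (g w) * f w)"
proof (rule Bochner_Integration.integrable_bound[where f="\<lambda>w. 6 * f w"])
  assume "integrable mu f" "g \<in> borel_measurable mu"
  then show "integrable mu (\<lambda>w. 6 * f w)" by simp
  show "(\<lambda>w. Dc (g w) * f w) \<in> borel_measurable mu" using \<open>integrable mu f\<close> \<open>g \<in> borel_measurable mu\<close> by measurable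
  show "AE w in mu. norm (Dc (g w) * f w) \<le> norm (6 * f w)"
    using Dc_bound by (auto simp: abs_mult intro!: always_eventually mult_right_mono)
qed

lemma lux_norm_eq:
  assumes "integrable mu f"
  shows "lux_norm mu f = Inf {l. 0 < l \<and> Imod mu (\<lambda>w. f w / l) \<le> 1}"
proof -
  have "(\<integral>\<^sup>+ x. ennreal (orl_M (f x / l)) \<partial>mu) = ennreal (Imod mu (\<lambda>w. f w / l))" for l
    unfolding Imod_def orl_M_Mc[abs_def]
    by (rule nn_integral_eq_integral) (use assms integrable_Mc[of mu "\<lambda>w. f w / l"] Mc_nonneg in auto)
  then show ?thesis unfolding lux_norm_def by simp
qed

lemma lux_le:
  assumes "integrable mu f" "0 < l" "Imod mu (\<lambda>w. f w / l) \<le> 1"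
  shows "lux_norm mu f \<le> l"
  unfolding lux_norm_eq[OF assms(1)]
  by (rule cInf_lower) (use assms in \<open>auto intro!: bdd_belowI[where m=0]\<close>)

lemma Imod_mono:
  assumes "integrable mu f" "0 < l" "l \<le> l'"
  shows "Imod mu (\<lambda>w. f w / l') \<le> Imod mu (\<lambda>w. f w / l)"
  unfolding Imod_def
proof (rule integral_mono)
  show "integrable mu (\<lambda>w. Mc (f w / l'))" "integrable mu (\<lambda>w. Mc (f w / l))"
    using assms by (auto intro!: integrable_Mc)
  fix w
  have "\<bar>f w / l'\<bar> \<le> \<bar>f w / l\<bar>" using assms
    by (auto simp: abs_divide intro!: divide_left_mono)
  then show "Mc (f w / l') \<le> Mc (f w / l)" by (rule Mc_mono)
qed

lemma sq_aux: "(l::real) * 2 \<le> 1 + l * l"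
proof -
  have "0 \<le> (l-1)*(l-1)" by simp
  moreover have "(l-1)*(l-1) = l*l - 2*l + 1" by (simp add: algebra_simps)
  ultimately show ?thesis by linarith
qed

lemma lux_one:
  assumes P: "prob_space mu" and f: "integrable mu f" and n: "lux_norm mu f = 1"
  shows "1/48 \<le> Imod mu f \<and> Imod mu f \<le> 1"
proof -
  interpret prob_space mu by fact
  define S where "S = {l. 0 < l \<and> Imod mu (\<lambda>w. f w / l) \<le> 1}"
  have InfS: "Inf S = 1" using n unfolding lux_norm_eq[OF f] S_def .
  have bdd: "bdd_below S" unfolding S_def by (auto intro!: bdd_belowI[where m=0])
  define L where "L = (\<integral>w. \<bar>f w\<bar> \<partial>mu)"
  have L0: "0 \<le> L" unfolding L_def by simp
  have lin: "Imod mu (\<lambda>w. f w / l) \<le> 6 * L / l" if "0 < l" for l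
  proof -
    have "Imod mu (\<lambda>w. f w / l) \<le> (\<integral>w. 6 * \<bar>f w\<bar> / l \<partial>mu)"
      unfolding Imod_def
      apply (rule integral_mono)
      using f that apply (auto intro!: integrable_Mc)[2]
      subgoal for w using Mc_le_lin[of "f w / l"] that by (simp add: abs_divide)
      done
    also have "\<dots> = 6 * L / l" unfolding L_def by simp
    finally show ?thesis .
  qed
  have Sne: "S \<noteq> {}"
  proof -
    define l0 where "l0 = max 1 (6 * L)"
    have "0 < l0" unfolding l0_def by simp
    moreover have "6 * L / l0 \<le> 1" unfolding l0_def using L0 by (auto simp: field_simps)
    moreover have "Imod mu (\<lambda>w. f w / l0) \<le> 1" using lin[of l0] \<open>0 < l0\<close> \<open>6 * L / l0 \<le> 1\<close> by linarith
    ultimately have "l0 \<in> S" unfolding S_def by auto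
    then show ?thesis by auto
  qed
  have up: "Imod mu f \<le> 1"
  proof (rule ccontr)
    assume "\<not> Imod mu f \<le> 1"
    define d where "d = Imod mu f - 1"
    have d: "0 < d" using \<open>\<not> Imod mu f \<le> 1\<close> unfolding d_def by simp
    define l where "l = 1 + d / (2 * (6 * L + 1))"
    have l1: "1 < l" unfolding l_def using d L0 by simp
    then obtain l' where l': "l' \<in> S" "l' < l"
      using cInf_less_iff[OF Sne bdd] InfS by auto
    have "Imod mu (\<lambda>w. f w / l) \<le> Imod mu (\<lambda>w. f w / l')"
      using l' f unfolding S_def by (intro Imod_mono) auto
    also have "\<dots> \<le> 1" using l' unfolding S_def by auto
    finally have Il: "Imod mu (\<lambda>w. f w / l) \<le> 1" .
    have "Imod mu f - Imod mu (\<lambda>w. f w / l) \<le> (\<integral>w. 6 * ((l - 1) * \<bar>f w\<bar>) \<partial>mu)"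
      unfolding Imod_def
    proof (subst Bochner_Integration.integral_diff[symmetric])
      show "integrable mu (\<lambda>w. Mc (f w))" "integrable mu (\<lambda>w. Mc (f w / l))"
        using f by (auto intro!: integrable_Mc)
      show "(\<integral>w. Mc (f w) - Mc (f w / l) \<partial>mu) \<le> (\<integral>w. 6 * ((l - 1) * \<bar>f w\<bar>) \<partial>mu)"
      proof (rule integral_mono)
        show "integrable mu (\<lambda>w. Mc (f w) - Mc (f w / l))"
          using f by (auto intro!: integrable_Mc)
        show "integrable mu (\<lambda>w. 6 * ((l - 1) * \<bar>f w\<bar>))" using f by simp
        fix w
        have e: "f w - f w / l = (1 - 1/l) * f w" using l1 by (simp add: field_simps)
        have "0 \<le> 1 - 1/l" using l1 by simp
        then have "\<bar>f w - f w / l\<bar> = (1 - 1/l) * \<bar>f w\<bar>"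
          unfolding e by (simp add: abs_mult)
        also have "\<dots> \<le> (l - 1) * \<bar>f w\<bar>"
          apply (rule mult_right_mono) using l1 sq_aux[of l] by (auto simp: field_simps)
        finally show "Mc (f w) - Mc (f w / l) \<le> 6 * ((l - 1) * \<bar>f w\<bar>)"
          using Mc_lip[of "f w" "f w / l"] abs_ge_self[of "Mc (f w) - Mc (f w / l)"]
          by (meson mult_left_mono order_trans zero_le_numeral)
      qed
    qed
    also have "\<dots> = 6 * (l - 1) * L" unfolding L_def by simp
    also have "\<dots> < d"
    proof -
      have q: "6 * L / (2 * (6 * L + 1)) < 1" using L0 by simp
      have "6 * (l - 1) * L = d * (6 * L / (2 * (6 * L + 1)))" unfolding l_def by simp
      also have "\<dots> < d * 1" by (rule mult_strict_left_mono[OF q d])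
      finally show ?thesis by simp
    qed
    finally show False using Il unfolding d_def by simp
  qed
  have low: "1/48 \<le> Imod mu f"
  proof (rule ccontr)
    assume "\<not> 1/48 \<le> Imod mu f"
    have "Imod mu (\<lambda>w. f w / (1/2)) \<le> 48 * Imod mu f"
      unfolding Imod_def
      apply (subst integral_mult_right_zero[symmetric])
      apply (rule integral_mono)
      using f apply (auto intro!: integrable_Mc)[2]
      subgoal for w using Mc_double[of "f w"] by (simp add: mult.commute)
      done
    then have "1/2 \<in> S" unfolding S_def using \<open>\<not> 1/48 \<le> Imod mu f\<close> by simp
    then have "Inf S \<le> 1/2" by (rule cInf_lower[OF _ bdd])
    then show False using InfS by simp
  qed
  show ?thesis using up low by simp
qed

lemma L1_le_one:
  assumes P: "prob_space mu" and f: "integrable mu f" and I: "Imod mu f \<le> 1"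
  shows "L1_norm mu f \<le> 1"
proof -
  interpret prob_space mu by fact
  have "(\<integral>w. \<bar>f w\<bar> \<partial>mu) \<le> (\<integral>w. (Mc (f w) + 1) / 2 \<partial>mu)"
    apply (rule integral_mono) using f apply (auto intro!: integrable_Mc)[2]
    subgoal for w using Mc_ge_lin[of "f w"] by simp
    done
  also have "\<dots> = (Imod mu f + 1) / 2" unfolding Imod_def using f
    by (simp add: integrable_Mc prob_space)
  finally show ?thesis unfolding L1_norm_def using I by simp
qed


lemma norm_step:
  fixes x y :: "'a \<Rightarrow> real"
  assumes x: "integrable mu x" and y: "integrable mu y"
    and Ix: "1/48 \<le> Imod mu x" "Imod mu x \<le> 1"
    and c: "\<bar>c\<bar> \<le> \<tau>" and e: "0 \<le> e"
    and kap: "kap = (\<integral>w. Dc (x w) * x w \<partial>mu)"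
    and Lc: "Lc = (\<integral>w. Dc (x w) * y w \<partial>mu)"
    and Bq: "Bq = (\<integral>w. qf (\<tau> * y w) \<partial>mu)"
    and Aq: "Aq = (\<integral>w. qf (e * x w) \<partial>mu)"
    and eps: "eps = (c * Lc + 24 * (Bq + Aq)) / kap"
    and eh: "\<bar>eps\<bar> \<le> 1/2" and ee: "\<bar>eps\<bar> \<le> e"
  shows "lux_norm mu (\<lambda>w. x w + c * y w) \<le> 1 + eps"
proof -
  have xm[measurable]: "x \<in> borel_measurable mu" using x by auto
  have ym[measurable]: "y \<in> borel_measurable mu" using y by auto
  have qy: "integrable mu (\<lambda>w. qf (\<tau> * y w))" by (rule integrable_qf) (simp add: y)
  have qx: "integrable mu (\<lambda>w. qf (e * x w))" by (rule integrable_qf) (simp add: x)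
  have kap_ge: "1/48 \<le> kap"
  proof -
    have "Imod mu x \<le> kap" unfolding Imod_def kap
      apply (rule integral_mono)
      using x by (auto intro!: integrable_Mc integrable_Dc_mult Mc_le_Dc)
    then show ?thesis using Ix by simp
  qed
  define lam where "lam = 1 + eps"
  have lam: "1/2 \<le> lam" "lam \<le> 3/2" using eh unfolding lam_def by auto
  define k where "k w = (c * y w - eps * x w) / lam" for w
  have kint: "integrable mu k" unfolding k_def using x y by simp
  have S0: "0 \<le> Bq + Aq" unfolding Bq Aq using qf_nonneg
    by (simp add: integral_nonneg)
  have split: "(x w + c * y w) / lam = x w + k w" for w
    unfolding k_def using lam by (simp add: field_simps lam_def)
  have "Imod mu (\<lambda>w. (x w + c * y w) / lam) = (\<integral>w. Mc (x w + k w) \<partial>mu)"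
    unfolding Imod_def split ..
  also have "\<dots> \<le> (\<integral>w. Mc (x w) + Dc (x w) * k w + qf (k w) \<partial>mu)"
    apply (rule integral_mono)
    using x kint xm by (auto intro!: Bochner_Integration.integrable_add integrable_Mc integrable_Dc_mult integrable_qf Mc_taylor)
  also have "\<dots> = Imod mu x + (\<integral>w. Dc (x w) * k w \<partial>mu) + (\<integral>w. qf (k w) \<partial>mu)"
    unfolding Imod_def using x kint
    by (simp add: integrable_Mc integrable_Dc_mult integrable_qf)
  also have "(\<integral>w. Dc (x w) * k w \<partial>mu) = (c * Lc - eps * kap) / lam"
  proof -
    have "(\<lambda>w. Dc (x w) * k w) = (\<lambda>w. (c * (Dc (x w) * y w) - eps * (Dc (x w) * x w)) / lam)"
      unfolding k_def by (auto simp: field_simps)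
    then show ?thesis unfolding Lc kap
      using x y by (simp add: integrable_Dc_mult)
  qed
  also have "(\<integral>w. qf (k w) \<partial>mu) \<le> 16 * (Bq + Aq)"
  proof -
    have "(\<integral>w. qf (k w) \<partial>mu) \<le> (\<integral>w. 16 * (qf (\<tau> * y w) + qf (e * x w)) \<partial>mu)"
    proof (rule integral_mono)
      show "integrable mu (\<lambda>w. qf (k w))" using kint by (rule integrable_qf)
      show "integrable mu (\<lambda>w. 16 * (qf (\<tau> * y w) + qf (e * x w)))"
        using qx qy by auto
      fix w
      have "\<bar>c * y w - eps * x w\<bar> \<le> \<tau> * \<bar>y w\<bar> + e * \<bar>x w\<bar>"
      proof -
        have "\<bar>c * y w\<bar> \<le> \<tau> * \<bar>y w\<bar>" using c by (simp add: abs_mult mult_right_mono)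
        moreover have "\<bar>eps * x w\<bar> \<le> e * \<bar>x w\<bar>" using ee by (simp add: abs_mult mult_right_mono)
        ultimately show ?thesis by linarith
      qed
      then have A: "\<bar>c * y w - eps * x w\<bar> / lam \<le> (\<tau> * \<bar>y w\<bar> + e * \<bar>x w\<bar>) / lam"
        using lam by (intro divide_right_mono) auto
      have N: "0 \<le> \<tau> * \<bar>y w\<bar> + e * \<bar>x w\<bar>" using c e by simp
      have B: "(\<tau> * \<bar>y w\<bar> + e * \<bar>x w\<bar>) / lam \<le> (\<tau> * \<bar>y w\<bar> + e * \<bar>x w\<bar>) / (1/2)"
        using lam N by (intro divide_left_mono) auto
      have "\<bar>k w\<bar> = \<bar>c * y w - eps * x w\<bar> / lam" unfolding k_def using lam by (simp add: abs_divide)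
      then have "\<bar>k w\<bar> \<le> 2 * (\<tau> * \<bar>y w\<bar> + e * \<bar>x w\<bar>)"
        using A B by simp
      then have "\<bar>k w\<bar> \<le> 2 * \<bar>\<tau> * y w\<bar> + 2 * \<bar>e * x w\<bar>"
        using c e by (simp add: abs_mult)
      then show "qf (k w) \<le> 16 * (qf (\<tau> * y w) + qf (e * x w))" by (rule qf_sum_bound)
    qed
    also have "\<dots> = 16 * (Bq + Aq)" unfolding Bq Aq using qx qy by simp
    finally show ?thesis .
  qed
  finally have I1: "Imod mu (\<lambda>w. (x w + c * y w) / lam) \<le> Imod mu x + (c * Lc - eps * kap) / lam + 16 * (Bq + Aq)"
    by simp
  have "c * Lc - eps * kap = - 24 * (Bq + Aq)" unfolding eps using kap_ge by simp
  then have "(c * Lc - eps * kap) / lam = - 24 * (Bq + Aq) / lam" by simp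
  also have "\<dots> \<le> - 16 * (Bq + Aq)"
  proof -
    have "(16 * (Bq + Aq)) * lam \<le> (16 * (Bq + Aq)) * (3/2)" using S0 lam
      by (intro mult_left_mono) auto
    then have "16 * (Bq + Aq) * lam \<le> 24 * (Bq + Aq)" by simp
    then show ?thesis using lam by (simp add: field_simps)
  qed
  finally have "Imod mu (\<lambda>w. (x w + c * y w) / lam) \<le> 1" using I1 Ix by simp
  then have "lux_norm mu (\<lambda>w. x w + c * y w) \<le> lam"
    by (intro lux_le) (use x y lam in auto)
  then show ?thesis unfolding lam_def .
qed


lemma kap_ge:
  assumes x: "integrable mu x" and Ix: "1/48 \<le> Imod mu x"
  shows "1/48 \<le> (\<integral>w. Dc (x w) * x w \<partial>mu)"
proof -
  have "Imod mu x \<le> (\<integral>w. Dc (x w) * x w \<partial>mu)" unfolding Imod_def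
    apply (rule integral_mono)
    using x by (auto intro!: integrable_Mc integrable_Dc_mult Mc_le_Dc)
  then show ?thesis using Ix by simp
qed

lemma Lc_bound:
  assumes P: "prob_space mu" and x: "integrable mu x" and y: "integrable mu y" and L1: "L1_norm mu y \<le> 1"
  shows "\<bar>\<integral>w. Dc (x w) * y w \<partial>mu\<bar> \<le> 6"
proof -
  have "\<bar>\<integral>w. Dc (x w) * y w \<partial>mu\<bar> \<le> (\<integral>w. \<bar>Dc (x w) * y w\<bar> \<partial>mu)"
    by (rule integral_abs_bound)
  also have "\<dots> \<le> (\<integral>w. 6 * \<bar>y w\<bar> \<partial>mu)"
    apply (rule integral_mono)
    using x y apply (auto intro!: integrable_Dc_mult)[2]
    subgoal for w using Dc_bound[of "x w"] by (simp add: abs_mult mult_right_mono)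
    done
  also have "\<dots> = 6 * L1_norm mu y" unfolding L1_norm_def by simp
  finally show ?thesis using L1 by simp
qed

lemma rho_generic:
  assumes P: "prob_space mu" and Xint: "X \<subseteq> {f. integrable mu f}"
    and Qb: "\<And>g s. g \<in> X \<Longrightarrow> L1_norm mu g \<le> 1 \<Longrightarrow> 0 < s \<Longrightarrow> s \<le> s0 \<Longrightarrow> (\<integral>w. qf (s * g w) \<partial>mu) \<le> \<Phi> s"
    and t0: "0 < \<tau>" and t1: "1440 * \<tau> \<le> s0" and t2: "\<Phi> \<tau> + \<Phi> (1440 * \<tau>) \<le> \<tau>" and t3: "\<tau> \<le> 1/2880"
  shows "rho_mod mu X \<tau> \<le> ereal (1152 * (\<Phi> \<tau> + \<Phi> (1440 * \<tau>)))"
  unfolding rho_mod_def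
proof (rule Sup_least)
  fix r assume "r \<in> {ereal ((lux_norm mu (\<lambda>w. x w + \<tau> * y w) + lux_norm mu (\<lambda>w. x w - \<tau> * y w)) / 2 - 1) | x y.
        x \<in> X \<and> y \<in> X \<and> lux_norm mu x = 1 \<and> lux_norm mu y = 1}"
  then obtain x y where r: "r = ereal ((lux_norm mu (\<lambda>w. x w + \<tau> * y w) + lux_norm mu (\<lambda>w. x w - \<tau> * y w)) / 2 - 1)"
    and xX: "x \<in> X" and yX: "y \<in> X" and nx: "lux_norm mu x = 1" and ny: "lux_norm mu y = 1" by blast
  have x: "integrable mu x" and y: "integrable mu y" using xX yX Xint by auto
  have Ix: "1/48 \<le> Imod mu x" "Imod mu x \<le> 1" using lux_one[OF P x nx] by auto
  have Iy: "Imod mu y \<le> 1" using lux_one[OF P y ny] by auto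
  have L1x: "L1_norm mu x \<le> 1" using L1_le_one[OF P x Ix(2)] .
  have L1y: "L1_norm mu y \<le> 1" using L1_le_one[OF P y Iy] .
  define e where "e = 1440 * \<tau>"
  define kap where "kap = (\<integral>w. Dc (x w) * x w \<partial>mu)"
  define Lc where "Lc = (\<integral>w. Dc (x w) * y w \<partial>mu)"
  define Bq where "Bq = (\<integral>w. qf (\<tau> * y w) \<partial>mu)"
  define Aq where "Aq = (\<integral>w. qf (e * x w) \<partial>mu)"
  have kap: "1/48 \<le> kap" unfolding kap_def using kap_ge[OF x Ix(1)] .
  have Lc: "\<bar>Lc\<bar> \<le> 6" unfolding Lc_def using Lc_bound[OF P x y L1y] .
  have Bq: "Bq \<le> \<Phi> \<tau>" unfolding Bq_def using Qb[OF yX L1y t0] t0 t1 by simp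
  have Aq: "Aq \<le> \<Phi> (1440 * \<tau>)" unfolding Aq_def e_def using Qb[OF xX L1x, of "1440 * \<tau>"] t0 t1 by simp
  have Bq0: "0 \<le> Bq" unfolding Bq_def using qf_nonneg by (simp add: integral_nonneg)
  have Aq0: "0 \<le> Aq" unfolding Aq_def using qf_nonneg by (simp add: integral_nonneg)
  have S: "Bq + Aq \<le> \<tau>" using Bq Aq t2 by simp
  define ep where "ep = (\<tau> * Lc + 24 * (Bq + Aq)) / kap"
  define em where "em = ((-\<tau>) * Lc + 24 * (Bq + Aq)) / kap"
  have num: "\<bar>c * Lc + 24 * (Bq + Aq)\<bar> \<le> 30 * \<tau>" if "\<bar>c\<bar> = \<tau>" for c
  proof -
    have "\<bar>c * Lc\<bar> \<le> \<tau> * 6" using that Lc t0 by (simp add: abs_mult mult_left_mono)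
    moreover have "\<bar>c * Lc + 24 * (Bq + Aq)\<bar> \<le> \<bar>c * Lc\<bar> + \<bar>24 * (Bq + Aq)\<bar>" by (rule abs_triangle_ineq)
    moreover have "\<bar>24 * (Bq + Aq)\<bar> = 24 * (Bq + Aq)" using Bq0 Aq0 by simp
    ultimately have "\<bar>c * Lc + 24 * (Bq + Aq)\<bar> \<le> \<tau> * 6 + 24 * (Bq + Aq)" by linarith
    moreover have "\<tau> * 6 + 24 * (Bq + Aq) \<le> 30 * \<tau>" using S by (simp add: algebra_simps)
    ultimately show ?thesis by (rule order_trans)
  qed
  have ebound: "\<bar>(c * Lc + 24 * (Bq + Aq)) / kap\<bar> \<le> 1440 * \<tau>" if "\<bar>c\<bar> = \<tau>" for c
  proof -
    have "\<bar>(c * Lc + 24 * (Bq + Aq)) / kap\<bar> = \<bar>c * Lc + 24 * (Bq + Aq)\<bar> / kap"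
      using kap by (simp add: abs_divide)
    also have "\<dots> \<le> (30 * \<tau>) / kap" using num[OF that] kap by (intro divide_right_mono) auto
    also have "\<dots> \<le> (30 * \<tau>) / (1/48)" using kap t0 by (intro divide_left_mono) auto
    finally show ?thesis by simp
  qed
  have eh: "e \<le> 1/2" unfolding e_def using t3 by simp
  have ep1: "\<bar>ep\<bar> \<le> e" unfolding ep_def e_def using ebound[of \<tau>] t0 by auto
  have em1: "\<bar>em\<bar> \<le> e" unfolding em_def e_def using ebound[of "-\<tau>"] t0 by auto
  have ep: "\<bar>ep\<bar> \<le> e" "\<bar>ep\<bar> \<le> 1/2" using ep1 eh by auto
  have em: "\<bar>em\<bar> \<le> e" "\<bar>em\<bar> \<le> 1/2" using em1 eh by auto
  have e0: "0 \<le> e" unfolding e_def using t0 by simp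
  have np: "lux_norm mu (\<lambda>w. x w + \<tau> * y w) \<le> 1 + ep"
    by (rule norm_step[OF x y Ix _ e0 kap_def Lc_def Bq_def Aq_def ep_def ep(2) ep(1)]) (use t0 in simp)
  have nm: "lux_norm mu (\<lambda>w. x w + (-\<tau>) * y w) \<le> 1 + em"
    by (rule norm_step[OF x y Ix _ e0 kap_def Lc_def Bq_def Aq_def em_def em(2) em(1)]) (use t0 in simp)
  have nm': "lux_norm mu (\<lambda>w. x w - \<tau> * y w) \<le> 1 + em" using nm by simp
  have "ep + em = 48 * (Bq + Aq) / kap" unfolding ep_def em_def add_divide_distrib[symmetric] by (simp add: algebra_simps)
  also have "\<dots> \<le> 48 * (Bq + Aq) / (1/48)" using kap Bq0 Aq0 by (intro divide_left_mono) auto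
  finally have "(ep + em) / 2 \<le> 1152 * (Bq + Aq)" by simp
  also have "\<dots> \<le> 1152 * (\<Phi> \<tau> + \<Phi> (1440 * \<tau>))" using Aq Bq by simp
  finally have F: "(ep + em) / 2 \<le> 1152 * (\<Phi> \<tau> + \<Phi> (1440 * \<tau>))" .
  have "(lux_norm mu (\<lambda>w. x w + \<tau> * y w) + lux_norm mu (\<lambda>w. x w - \<tau> * y w)) / 2 - 1 \<le> (ep + em) / 2"
    using np nm' by (simp add: field_simps)
  from order_trans[OF this F] show "r \<le> ereal (1152 * (\<Phi> \<tau> + \<Phi> (1440 * \<tau>)))"
    unfolding r by simp
qed


lemma tonelli_tail:
  fixes f :: "'a \<Rightarrow> real"
  assumes P: "prob_space mu" and f[measurable]: "f \<in> borel_measurable mu"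
  shows "(\<integral>\<^sup>+ u. indicator {t..} u * ennreal (distr_fun mu f u) \<partial>lborel)
       = (\<integral>\<^sup>+ w. ennreal (max (\<bar>f w\<bar> - t) 0) \<partial>mu)"
proof -
  interpret prob_space mu by fact
  have psf: "pair_sigma_finite mu lborel"
    unfolding pair_sigma_finite_def
    by (simp add: sigma_finite_measure_axioms lborel.sigma_finite_measure_axioms)
  have step: "indicator {t..} u * ennreal (distr_fun mu f u) = (\<integral>\<^sup>+ w. (if t \<le> u \<and> u < \<bar>f w\<bar> then 1 else 0 :: ennreal) \<partial>mu)" for u
  proof -
    have "indicator {t..} u * ennreal (distr_fun mu f u) = indicator {t..} u * (\<integral>\<^sup>+ w. indicator {w \<in> space mu. u < \<bar>f w\<bar>} w \<partial>mu)"
      unfolding distr_fun_def by (simp add: emeasure_eq_measure[symmetric])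
    also have "\<dots> = (\<integral>\<^sup>+ w. indicator {t..} u * indicator {w \<in> space mu. u < \<bar>f w\<bar>} w \<partial>mu)"
      by (rule nn_integral_cmult[symmetric]) measurable
    also have "\<dots> = (\<integral>\<^sup>+ w. (if t \<le> u \<and> u < \<bar>f w\<bar> then 1 else 0 :: ennreal) \<partial>mu)"
      by (intro nn_integral_cong) (auto simp: indicator_def)
    finally show ?thesis .
  qed
  have "(\<integral>\<^sup>+ u. indicator {t..} u * ennreal (distr_fun mu f u) \<partial>lborel)
      = (\<integral>\<^sup>+ u. \<integral>\<^sup>+ w. (if t \<le> u \<and> u < \<bar>f w\<bar> then 1 else 0 :: ennreal) \<partial>mu \<partial>lborel)"
    by (simp only: step)
  also have "\<dots> = (\<integral>\<^sup>+ w. \<integral>\<^sup>+ u. (if t \<le> u \<and> u < \<bar>f w\<bar> then 1 else 0 :: ennreal) \<partial>lborel \<partial>mu)"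
    by (rule pair_sigma_finite.Fubini'[OF psf]) measurable
  also have "\<dots> = (\<integral>\<^sup>+ w. ennreal (max (\<bar>f w\<bar> - t) 0) \<partial>mu)"
  proof (intro nn_integral_cong)
    fix w
    have "(\<integral>\<^sup>+ u. (if t \<le> u \<and> u < \<bar>f w\<bar> then 1 else 0 :: ennreal) \<partial>lborel)
        = (\<integral>\<^sup>+ u. indicator {t..<\<bar>f w\<bar>} u \<partial>lborel)"
      by (intro nn_integral_cong) (auto simp: indicator_def)
    also have "\<dots> = ennreal (max (\<bar>f w\<bar> - t) 0)"
      by (auto simp: max_def)
    finally show "(\<integral>\<^sup>+ u. (if t \<le> u \<and> u < \<bar>f w\<bar> then 1 else 0 :: ennreal) \<partial>lborel) = ennreal (max (\<bar>f w\<bar> - t) 0)" .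
  qed
  finally show ?thesis .
qed


definition Ht :: "'a measure \<Rightarrow> ('a \<Rightarrow> real) \<Rightarrow> real \<Rightarrow> real" where
  "Ht mu g t = (\<integral>w. max (\<bar>g w\<bar> - t) 0 \<partial>mu)"

lemma integrable_tail: fixes g :: "'a \<Rightarrow> real" shows "prob_space mu \<Longrightarrow> integrable mu g \<Longrightarrow> integrable mu (\<lambda>w. max (\<bar>g w\<bar> - t) 0)"
proof -
  assume P: "prob_space mu" and g: "integrable mu g"
  interpret prob_space mu by fact
  have A: "integrable mu (\<lambda>w. \<bar>g w\<bar> - t)" using g by (intro Bochner_Integration.integrable_diff Bochner_Integration.integrable_abs) auto
  have B: "integrable mu (\<lambda>w. 0::real)" by simp
  show ?thesis using Bochner_Integration.integrable_max[OF A B] .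
qed

lemma Ht_nonneg: "0 \<le> Ht mu g t" unfolding Ht_def by (simp add: integral_nonneg)

lemma ennreal_le_abs: "ennreal a \<le> ennreal b \<Longrightarrow> 0 \<le> a \<Longrightarrow> a \<le> \<bar>b\<bar>"
  by (cases "0 \<le> b") (auto simp: ennreal_le_iff ennreal_neg)

lemma H_from_G:
  assumes P: "prob_space mu" and X: "closed_L1_subspace mu X"
    and hyp: "\<And>t. t \<ge> t0 \<Longrightarrow> G_fun mu X t \<le> ennreal (C / t powr (p - 1))"
    and t0: "0 < t0"
    and g: "g \<in> X" and L1: "L1_norm mu g \<le> 1" and t: "t0 \<le> t"
  shows "Ht mu g t \<le> \<bar>C\<bar> * t powr (1 - p)"
proof -
  interpret prob_space mu by fact
  have Xi: "X \<subseteq> {f. integrable mu f}" and Xs: "\<And>f c. f \<in> X \<Longrightarrow> (\<lambda>w. c * f w) \<in> X"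
    using X unfolding closed_L1_subspace_def by auto
  have gi: "integrable mu g" using g Xi by auto
  have tp: "0 < t" using t t0 by simp
  have rhs: "\<bar>C\<bar> / t powr (p - 1) = \<bar>C\<bar> * t powr (1 - p)"
  proof -
    have "t powr (1 - p) = inverse (t powr (p - 1))" by (metis minus_diff_eq powr_minus)
    then show ?thesis by (simp add: divide_inverse)
  qed
  define a where "a = L1_norm mu g"
  have a0: "0 \<le> a" unfolding a_def L1_norm_def by simp
  show ?thesis
  proof (cases "a = 0")
    case True
    have "Ht mu g t \<le> (\<integral>w. \<bar>g w\<bar> \<partial>mu)" unfolding Ht_def
      apply (rule integral_mono) using gi tp by (auto intro!: integrable_tail[OF P])
    also have "\<dots> = 0" using True unfolding a_def L1_norm_def .
    moreover have "0 \<le> \<bar>C\<bar> * t powr (1 - p)" by simp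
    ultimately show ?thesis by linarith
  next
    case False
    then have ap: "0 < a" using a0 by simp
    define g1 where "g1 w = (1/a) * g w" for w
    have g1X: "g1 \<in> X" unfolding g1_def[abs_def] using Xs[OF g] .
    have g1i: "integrable mu g1" using g1X Xi by auto
    have "L1_norm mu g1 = (1/a) * a" unfolding g1_def L1_norm_def a_def using ap
      by (simp add: abs_mult)
    then have g1n: "L1_norm mu g1 = 1" using ap by simp
    have "(\<integral>\<^sup>+ u. indicator {t..} u * ennreal (distr_fun mu g1 u) \<partial>lborel) \<le> G_fun mu X t"
      unfolding G_fun_def by (rule SUP_upper) (use g1X g1n in auto)
    also have "\<dots> \<le> ennreal (C / t powr (p - 1))" by (rule hyp[OF t])
    finally have "(\<integral>\<^sup>+ w. ennreal (max (\<bar>g1 w\<bar> - t) 0) \<partial>mu) \<le> ennreal (C / t powr (p - 1))"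
      using tonelli_tail[OF P, of g1 t] g1i by simp
    moreover have "(\<integral>\<^sup>+ w. ennreal (max (\<bar>g1 w\<bar> - t) 0) \<partial>mu) = ennreal (Ht mu g1 t)"
      unfolding Ht_def by (rule nn_integral_eq_integral) (use g1i integrable_tail[OF P] in auto)
    ultimately have "ennreal (Ht mu g1 t) \<le> ennreal (C / t powr (p - 1))" by simp
    then have "Ht mu g1 t \<le> \<bar>C / t powr (p - 1)\<bar>"
      by (rule ennreal_le_abs[OF _ Ht_nonneg])
    then have H1: "Ht mu g1 t \<le> \<bar>C\<bar> / t powr (p - 1)"
      using tp by (simp add: abs_divide)
    have "Ht mu g t \<le> Ht mu g1 t" unfolding Ht_def
    proof (rule integral_mono)
      show "integrable mu (\<lambda>w. max (\<bar>g w\<bar> - t) 0)" "integrable mu (\<lambda>w. max (\<bar>g1 w\<bar> - t) 0)"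
        using gi g1i by (auto intro!: integrable_tail[OF P])
      fix w
      have a1: "a \<le> 1" using L1 unfolding a_def .
      have e: "g w = a * g1 w" unfolding g1_def using ap by simp
      have "max (\<bar>g w\<bar> - t) 0 = a * max (\<bar>g1 w\<bar> - t / a) 0"
        unfolding e using ap by (auto simp: abs_mult max_def field_simps)
      also have "\<dots> \<le> a * max (\<bar>g1 w\<bar> - t) 0"
      proof -
        have "t \<le> t / a" using ap a1 tp by (simp add: field_simps)
        then show ?thesis using ap by (intro mult_left_mono) auto
      qed
      also have "\<dots> \<le> max (\<bar>g1 w\<bar> - t) 0"
        using a1 a0 by (intro mult_left_le_one_le) auto
      finally show "max (\<bar>g w\<bar> - t) 0 \<le> max (\<bar>g1 w\<bar> - t) 0" .
    qed
    then show ?thesis using H1 rhs by simp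
  qed
qed

lemma dyadic_exists:
  fixes a b :: real
  assumes a: "0 < a" and ab: "a \<le> b"
  shows "\<exists>n. 2^n * a \<le> b \<and> b < 2^(Suc n) * a"
proof -
  obtain m where m: "b / a < 2^m" using real_arch_pow[of 2 "b/a"] by auto
  then have Pm: "b < 2^m * a" using a by (simp add: field_simps)
  define m0 where "m0 = (LEAST m. b < 2^m * a)"
  have P0: "b < 2^m0 * a" unfolding m0_def by (rule LeastI[of _ m]) (rule Pm)
  have "m0 \<noteq> 0" using P0 ab by (intro notI) simp
  then obtain n where n: "m0 = Suc n" by (cases m0) auto
  have "\<not> b < 2^n * a" using not_less_Least[of n "\<lambda>m. b < 2^m * a"] n unfolding m0_def by simp
  then show ?thesis using P0 n by (intro exI[of _ n]) simp
qed


lemma pointwise_dyadic: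
  fixes v t1 T :: real and N :: nat
  assumes v: "0 \<le> v" and t1: "0 < t1" and N1: "2^N * t1 \<le> T" and N2: "T < 2^(Suc N) * t1"
    and T2: "2 * t1 \<le> T"
  shows "min (v\<^sup>2) (T * v) \<le> 2 * t1 * v + (\<Sum>j<N. 8 * (2^j * t1) * max (v - 2^j * t1) 0) + 2 * T * max (v - T/2) 0"
proof -
  define S where "S = (\<Sum>j<N. 8 * (2^j * t1) * max (v - 2^j * t1) 0)"
  have S0: "0 \<le> S" unfolding S_def using t1 by (intro sum_nonneg) simp
  have R0: "0 \<le> 2 * T * max (v - T/2) 0" using T2 t1 by simp
  have L0: "0 \<le> 2 * t1 * v" using t1 v by simp
  have Tp: "0 < T" using T2 t1 by simp
  consider "v < 2 * t1" | "T < v" | "2 * t1 \<le> v \<and> v \<le> T" by linarith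
  then have "min (v\<^sup>2) (T * v) \<le> 2 * t1 * v + S + 2 * T * max (v - T/2) 0"
  proof cases
    case 1
    have "v\<^sup>2 = v * v" by (simp add: power2_eq_square)
    also have "\<dots> \<le> 2 * t1 * v" using 1 v by (intro mult_right_mono) auto
    finally have "min (v\<^sup>2) (T * v) \<le> 2 * t1 * v" by simp
    then show ?thesis using S0 R0 by linarith
  next
    case 2
    have "T * T \<le> T * v" using 2 Tp by (intro mult_left_mono) auto
    then have "T * v \<le> 2 * T * (v - T/2)" by (simp add: algebra_simps)
    also have "\<dots> = 2 * T * max (v - T/2) 0" using 2 Tp by simp
    finally have "min (v\<^sup>2) (T * v) \<le> 2 * T * max (v - T/2) 0" by simp
    then show ?thesis using S0 L0 by linarith
  next
    case 3
    obtain n where n1: "2^n * t1 \<le> v" and n2: "v < 2^(Suc n) * t1"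
      using dyadic_exists[OF t1, of v] 3 t1 by auto
    have "n \<noteq> 0" using n2 3 by (intro notI) simp
    then obtain j where j: "n = Suc j" by (cases n) auto
    have "(2::real)^n < 2^(Suc N)"
    proof -
      have "2^n * t1 < 2^(Suc N) * t1" using n1 3 N2 by linarith
      then show ?thesis using t1 by simp
    qed
    then have "n < Suc N" by (subst (asm) power_strict_increasing_iff) auto
    then have jN: "j < N" using j by simp
    define r where "r = 2^j * t1"
    have r0: "0 < r" unfolding r_def using t1 by simp
    have vr: "2 * r \<le> v" using n1 unfolding r_def j by simp
    have vr2: "v < 4 * r" using n2 unfolding r_def j by simp
    have "v\<^sup>2 = v * v" by (simp add: power2_eq_square)
    also have "\<dots> \<le> (4 * r) * v" using vr2 v by (intro mult_right_mono) auto
    also have "\<dots> = 8 * r * (v / 2)" by simp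
    also have "\<dots> \<le> 8 * r * (v - r)" using vr r0 by (intro mult_left_mono) auto
    also have "\<dots> = 8 * (2^j * t1) * max (v - 2^j * t1) 0" using vr r0 unfolding r_def by simp
    also have "\<dots> \<le> S" unfolding S_def
      by (rule member_le_sum[of j "{..<N}" "\<lambda>j. 8 * (2^j * t1) * max (v - 2^j * t1) 0"]) (use jN t1 in auto)
    finally have "min (v\<^sup>2) (T * v) \<le> S" by simp
    then show ?thesis using L0 R0 by linarith
  qed
  then show ?thesis unfolding S_def .
qed

lemma int_dyadic:
  fixes g :: "'a \<Rightarrow> real" and t1 T :: real and N :: nat
  assumes P: "prob_space mu" and g: "integrable mu g" and t1: "0 < t1"
    and N1: "2^N * t1 \<le> T" and N2: "T < 2^(Suc N) * t1" and T2: "2 * t1 \<le> T"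
  shows "(\<integral>w. min ((g w)\<^sup>2) (T * \<bar>g w\<bar>) \<partial>mu) \<le>
     2 * t1 * L1_norm mu g + (\<Sum>j<N. 8 * (2^j * t1) * Ht mu g (2^j * t1)) + 2 * T * Ht mu g (T/2)"
proof -
  have gm[measurable]: "g \<in> borel_measurable mu" using g by auto
  have Tp: "0 < T" using T2 t1 by simp
  have tl: "\<And>c. integrable mu (\<lambda>w. max (\<bar>g w\<bar> - c) 0)" using integrable_tail[OF P g] .
  have ga: "integrable mu (\<lambda>w. \<bar>g w\<bar>)" using g by (rule Bochner_Integration.integrable_abs)
  have mi: "integrable mu (\<lambda>w. min ((g w)\<^sup>2) (T * \<bar>g w\<bar>))"
  proof (rule Bochner_Integration.integrable_bound[where f="\<lambda>w. T * \<bar>g w\<bar>"])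
    show "integrable mu (\<lambda>w. T * \<bar>g w\<bar>)" using ga by simp
    show "(\<lambda>w. min ((g w)\<^sup>2) (T * \<bar>g w\<bar>)) \<in> borel_measurable mu" by measurable
    show "AE w in mu. norm (min ((g w)\<^sup>2) (T * \<bar>g w\<bar>)) \<le> norm (T * \<bar>g w\<bar>)"
      using Tp by (intro always_eventually allI) (simp add: abs_mult)
  qed
  have "(\<integral>w. min ((g w)\<^sup>2) (T * \<bar>g w\<bar>) \<partial>mu) \<le>
     (\<integral>w. 2 * t1 * \<bar>g w\<bar> + (\<Sum>j<N. 8 * (2^j * t1) * max (\<bar>g w\<bar> - 2^j * t1) 0) + 2 * T * max (\<bar>g w\<bar> - T/2) 0 \<partial>mu)"
  proof (rule integral_mono)
    show "integrable mu (\<lambda>w. min ((g w)\<^sup>2) (T * \<bar>g w\<bar>))" by (rule mi)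
    show "integrable mu (\<lambda>w. 2 * t1 * \<bar>g w\<bar> + (\<Sum>j<N. 8 * (2^j * t1) * max (\<bar>g w\<bar> - 2^j * t1) 0) + 2 * T * max (\<bar>g w\<bar> - T/2) 0)"
      using ga tl by (intro Bochner_Integration.integrable_add Bochner_Integration.integrable_sum Bochner_Integration.integrable_mult_right) auto
    fix w
    show "min ((g w)\<^sup>2) (T * \<bar>g w\<bar>) \<le> 2 * t1 * \<bar>g w\<bar> + (\<Sum>j<N. 8 * (2^j * t1) * max (\<bar>g w\<bar> - 2^j * t1) 0) + 2 * T * max (\<bar>g w\<bar> - T/2) 0"
      using pointwise_dyadic[OF abs_ge_zero t1 N1 N2 T2, of "g w"] by simp
  qed
  also have "\<dots> = 2 * t1 * L1_norm mu g + (\<Sum>j<N. 8 * (2^j * t1) * Ht mu g (2^j * t1)) + 2 * T * Ht mu g (T/2)"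
    unfolding L1_norm_def Ht_def
    using ga tl by (simp add: Bochner_Integration.integral_add Bochner_Integration.integral_sum Bochner_Integration.integrable_sum)
  finally show ?thesis .
qed

lemma qf_scaled: "0 < s \<Longrightarrow> qf (s * b) = 12 * s\<^sup>2 * min (b\<^sup>2) ((1/s) * \<bar>b\<bar>)"
proof -
  assume s: "0 < s"
  have "s\<^sup>2 * min (b\<^sup>2) ((1/s) * \<bar>b\<bar>) = min (s\<^sup>2 * b\<^sup>2) (s\<^sup>2 * ((1/s) * \<bar>b\<bar>))"
    by (simp add: min_mult_distrib_left)
  also have "s\<^sup>2 * ((1/s) * \<bar>b\<bar>) = \<bar>s * b\<bar>" using s by (simp add: power2_eq_square abs_mult)
  also have "s\<^sup>2 * b\<^sup>2 = (s * b)\<^sup>2" by (simp add: power_mult_distrib)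
  finally show ?thesis unfolding qf_def by simp
qed

lemma Q_eq:
  fixes g :: "'a \<Rightarrow> real"
  assumes "0 < s"
  shows "(\<integral>w. qf (s * g w) \<partial>mu) = 12 * s\<^sup>2 * (\<integral>w. min ((g w)\<^sup>2) ((1/s) * \<bar>g w\<bar>) \<partial>mu)"
  using assms by (simp add: qf_scaled)


lemma Q_general:
  fixes g :: "'a \<Rightarrow> real"
  assumes P: "prob_space mu" and g: "integrable mu g" and L1: "L1_norm mu g \<le> 1"
    and t1: "1 \<le> t1" and K: "0 \<le> K"
    and Hb: "\<And>t. t1 \<le> t \<Longrightarrow> Ht mu g t \<le> K * t powr (1 - p)"
    and s: "0 < s" "s \<le> 1 / (2 * t1)"
  shows "\<exists>N. 2^N * t1 \<le> 1/s \<and> (\<integral>w. qf (s * g w) \<partial>mu) \<le>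
      12 * s\<^sup>2 * (2 * t1 + 8 * K * (\<Sum>j<N. (2^j * t1) powr (2 - p)) + 4 * K * ((1/s)/2) powr (2 - p))"
proof -
  define T where "T = 1/s"
  have t1p: "0 < t1" using t1 by simp
  have T2: "2 * t1 \<le> T" unfolding T_def using s t1p by (simp add: field_simps)
  obtain N where N1: "2^N * t1 \<le> T" and N2: "T < 2^(Suc N) * t1"
    using dyadic_exists[OF t1p, of T] T2 t1p by auto
  have pw: "x * (K * x powr (1 - p)) = K * x powr (2 - p)" if "0 < x" for x :: real
  proof -
    have "x * x powr (1 - p) = x powr 1 * x powr (1 - p)" using that by simp
    also have "\<dots> = x powr (1 + (1 - p))" by (rule powr_add[symmetric])
    also have "1 + (1 - p) = 2 - p" by simp
    finally show ?thesis by (simp add: algebra_simps)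
  qed
  have "(\<integral>w. qf (s * g w) \<partial>mu) = 12 * s\<^sup>2 * (\<integral>w. min ((g w)\<^sup>2) (T * \<bar>g w\<bar>) \<partial>mu)"
    unfolding T_def by (rule Q_eq[OF s(1)])
  also have "(\<integral>w. min ((g w)\<^sup>2) (T * \<bar>g w\<bar>) \<partial>mu) \<le>
     2 * t1 * L1_norm mu g + (\<Sum>j<N. 8 * (2^j * t1) * Ht mu g (2^j * t1)) + 2 * T * Ht mu g (T/2)"
    by (rule int_dyadic[OF P g t1p N1 N2 T2])
  also have "\<dots> \<le> 2 * t1 + 8 * K * (\<Sum>j<N. (2^j * t1) powr (2 - p)) + 4 * K * (T/2) powr (2 - p)"
  proof -
    have a: "2 * t1 * L1_norm mu g \<le> 2 * t1" using L1 t1p by simp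
    have b: "(\<Sum>j<N. 8 * (2^j * t1) * Ht mu g (2^j * t1)) \<le> (\<Sum>j<N. 8 * ((2^j * t1) * (K * (2^j * t1) powr (1 - p))))"
    proof (rule sum_mono)
      fix j :: nat
      have "t1 \<le> 2^j * t1" using t1p by simp
      then have "Ht mu g (2^j * t1) \<le> K * (2^j * t1) powr (1 - p)" by (rule Hb)
      then show "8 * (2^j * t1) * Ht mu g (2^j * t1) \<le> 8 * ((2^j * t1) * (K * (2^j * t1) powr (1 - p)))"
        using t1p by (simp add: mult_left_mono)
    qed
    also have "\<dots> = (\<Sum>j<N. 8 * K * (2^j * t1) powr (2 - p))"
    proof (rule sum.cong[OF refl])
      fix j :: nat
      have "0 < 2^j * t1" using t1p by simp
      from pw[OF this] show "8 * ((2^j * t1) * (K * (2^j * t1) powr (1 - p))) = 8 * K * (2^j * t1) powr (2 - p)"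
        by simp
    qed
    also have "\<dots> = 8 * K * (\<Sum>j<N. (2^j * t1) powr (2 - p))"
      by (simp add: sum_distrib_left)
    finally have b': "(\<Sum>j<N. 8 * (2^j * t1) * Ht mu g (2^j * t1)) \<le> 8 * K * (\<Sum>j<N. (2^j * t1) powr (2 - p))" .
    have "Ht mu g (T/2) \<le> K * (T/2) powr (1 - p)" using T2 by (intro Hb) simp
    then have "2 * T * Ht mu g (T/2) \<le> 4 * ((T/2) * (K * (T/2) powr (1 - p)))"
      using T2 t1p by (simp add: mult_left_mono)
    also have "\<dots> = 4 * K * (T/2) powr (2 - p)"
    proof -
      have "0 < T/2" using T2 t1p by simp
      from pw[OF this] show ?thesis by (simp add: mult.commute)
    qed
    finally show ?thesis using a b' by linarith
  qed
  finally have "(\<integral>w. qf (s * g w) \<partial>mu) \<le> 12 * s\<^sup>2 * (2 * t1 + 8 * K * (\<Sum>j<N. (2^j * t1) powr (2 - p)) + 4 * K * (T/2) powr (2 - p))"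
    by (simp add: mult_left_mono)
  then show ?thesis using N1 unfolding T_def by blast
qed


lemma pow2_powr: "0 < t1 \<Longrightarrow> ((2::real)^j * t1) powr a = (2 powr a)^j * t1 powr a"
proof -
  assume t: "0 < t1"
  have "((2::real)^j * t1) powr a = (2^j) powr a * t1 powr a" using t by (simp add: powr_mult)
  also have "((2::real)^j) powr a = (2 powr (real j)) powr a" by (simp add: powr_realpow)
  also have "\<dots> = 2 powr (real j * a)" by (simp add: powr_powr)
  also have "\<dots> = (2 powr a)^j" by (simp add: powr_power)
  finally show ?thesis .
qed

lemma Q_gt2:
  fixes g :: "'a \<Rightarrow> real"
  assumes P: "prob_space mu" and g: "integrable mu g" and L1: "L1_norm mu g \<le> 1"
    and t1: "1 \<le> t1" and K: "0 \<le> K"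
    and Hb: "\<And>t. t1 \<le> t \<Longrightarrow> Ht mu g t \<le> K * t powr (1 - p)"
    and s: "0 < s" "s \<le> 1 / (2 * t1)" and p: "2 < p"
  shows "(\<integral>w. qf (s * g w) \<partial>mu) \<le> 12 * (2 * t1 + 8 * K / (1 - 2 powr (2 - p)) + 4 * K) * s\<^sup>2"
proof -
  obtain N where N1: "2^N * t1 \<le> 1/s" and Q: "(\<integral>w. qf (s * g w) \<partial>mu) \<le>
      12 * s\<^sup>2 * (2 * t1 + 8 * K * (\<Sum>j<N. (2^j * t1) powr (2 - p)) + 4 * K * ((1/s)/2) powr (2 - p))"
    using Q_general[OF P g L1 t1 K Hb s] by blast
  define r where "r = (2::real) powr (2 - p)"
  have r1: "r < 1" unfolding r_def using p by (intro powr_less_one) auto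
  have r0: "0 < r" unfolding r_def by simp
  have t1p: "0 < t1" using t1 by simp
  have t1a: "t1 powr (2 - p) \<le> 1" using powr_mono[of "2 - p" 0 t1] t1 p by simp
  have "(\<Sum>j<N. (2^j * t1) powr (2 - p)) = (\<Sum>j<N. r^j * t1 powr (2 - p))"
    unfolding r_def using pow2_powr[OF t1p] by simp
  also have "\<dots> \<le> (\<Sum>j<N. r^j)"
    by (rule sum_mono) (use t1a r0 in \<open>simp add: mult_left_le\<close>)
  also have "\<dots> = (1 - r^N) / (1 - r)" using r1 by (simp add: sum_gp_strict)
  also have "\<dots> \<le> 1 / (1 - r)" using r1 r0 by (intro divide_right_mono) auto
  finally have S: "(\<Sum>j<N. (2^j * t1) powr (2 - p)) \<le> 1 / (1 - r)" .
  have T: "((1/s)/2) powr (2 - p) \<le> 1"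
  proof -
    have "1/(2*t1) \<le> 1/2" using t1 by (simp add: field_simps)
    then have "s \<le> 1/2" using s by linarith
    then have "1 \<le> (1/s)/2" using s by (simp add: field_simps)
    then show ?thesis using powr_mono[of "2 - p" 0 "(1/s)/2"] p s(1) by simp
  qed
  have "2 * t1 + 8 * K * (\<Sum>j<N. (2^j * t1) powr (2 - p)) + 4 * K * ((1/s)/2) powr (2 - p)
      \<le> 2 * t1 + 8 * K * (1 / (1 - r)) + 4 * K * 1"
    using S T K by (intro add_mono mult_left_mono) auto
  then have "12 * s\<^sup>2 * (2 * t1 + 8 * K * (\<Sum>j<N. (2^j * t1) powr (2 - p)) + 4 * K * ((1/s)/2) powr (2 - p))
      \<le> 12 * s\<^sup>2 * (2 * t1 + 8 * K * (1 / (1 - r)) + 4 * K * 1)"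
    by (intro mult_left_mono) auto
  with Q show ?thesis unfolding r_def by (simp add: algebra_simps)
qed

lemma Q_lt2:
  fixes g :: "'a \<Rightarrow> real"
  assumes P: "prob_space mu" and g: "integrable mu g" and L1: "L1_norm mu g \<le> 1"
    and t1: "1 \<le> t1" and K: "0 \<le> K"
    and Hb: "\<And>t. t1 \<le> t \<Longrightarrow> Ht mu g t \<le> K * t powr (1 - p)"
    and s: "0 < s" "s \<le> 1 / (2 * t1)" and p: "1 < p" "p < 2"
  shows "(\<integral>w. qf (s * g w) \<partial>mu) \<le> (24 * t1 + 12 * (8 * K / (2 powr (2 - p) - 1) + 4 * K)) * s powr p"
proof -
  obtain N where N1: "2^N * t1 \<le> 1/s" and Q: "(\<integral>w. qf (s * g w) \<partial>mu) \<le>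
      12 * s\<^sup>2 * (2 * t1 + 8 * K * (\<Sum>j<N. (2^j * t1) powr (2 - p)) + 4 * K * ((1/s)/2) powr (2 - p))"
    using Q_general[OF P g L1 t1 K Hb s] by blast
  define a where "a = 2 - p"
  have a: "0 < a" "a < 1" unfolding a_def using p by auto
  define r where "r = (2::real) powr a"
  have r1: "1 < r" unfolding r_def using a by simp
  have t1p: "0 < t1" using t1 by simp
  define T where "T = 1/s"
  have Tp: "0 < T" unfolding T_def using s by simp
  have "(\<Sum>j<N. (2^j * t1) powr a) = t1 powr a * (\<Sum>j<N. r^j)"
    unfolding r_def using pow2_powr[OF t1p] by (simp add: sum_distrib_left mult.commute)
  also have "(\<Sum>j<N. r^j) = (r^N - 1) / (r - 1)"
    using r1 by (simp add: sum_gp_strict field_simps)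
  also have "\<dots> \<le> r^N / (r - 1)" using r1 by (intro divide_right_mono) auto
  finally have "(\<Sum>j<N. (2^j * t1) powr a) \<le> t1 powr a * (r^N / (r - 1))"
    by (simp add: mult_left_mono)
  also have "t1 powr a * (r^N / (r - 1)) = (2^N * t1) powr a / (r - 1)"
    unfolding r_def using pow2_powr[OF t1p, of N a] by simp
  also have "\<dots> \<le> T powr a / (r - 1)"
    using N1 r1 a t1p unfolding T_def by (intro divide_right_mono powr_mono2) auto
  finally have S: "(\<Sum>j<N. (2^j * t1) powr a) \<le> T powr a / (r - 1)" .
  have T2: "(T/2) powr a \<le> T powr a" using Tp a by (intro powr_mono2) auto
  have "2 * t1 + 8 * K * (\<Sum>j<N. (2^j * t1) powr a) + 4 * K * (T/2) powr a
      \<le> 2 * t1 + 8 * K * (T powr a / (r - 1)) + 4 * K * T powr a"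
    using S T2 K by (intro add_mono mult_left_mono) auto
  then have B: "12 * s\<^sup>2 * (2 * t1 + 8 * K * (\<Sum>j<N. (2^j * t1) powr a) + 4 * K * (T/2) powr a)
      \<le> 12 * s\<^sup>2 * (2 * t1 + 8 * K * (T powr a / (r - 1)) + 4 * K * T powr a)"
    by (intro mult_left_mono) auto
  have sT: "s\<^sup>2 * T powr a = s powr p"
  proof -
    have "T powr a = 1 powr a / s powr a" unfolding T_def by (rule powr_divide)
    also have "\<dots> = inverse (s powr a)" by (simp add: divide_inverse)
    also have "\<dots> = s powr (- a)" by (rule powr_minus[symmetric])
    finally have "T powr a = s powr (- a)" .
    moreover have "s\<^sup>2 = s powr 2" using s by simp
    ultimately have "s\<^sup>2 * T powr a = s powr 2 * s powr (- a)" by simp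
    also have "\<dots> = s powr (2 + - a)" by (rule powr_add[symmetric])
    also have "2 + - a = p" unfolding a_def by simp
    finally show ?thesis .
  qed
  have s2: "s\<^sup>2 \<le> s powr p"
  proof -
    have "1/(2*t1) \<le> 1" using t1 by (simp add: field_simps)
    then have "s \<le> 1" using s by linarith
    then have "s powr 2 \<le> s powr p" using s p by (intro powr_mono') auto
    then show ?thesis using s by simp
  qed
  have "12 * s\<^sup>2 * (2 * t1 + 8 * K * (T powr a / (r - 1)) + 4 * K * T powr a)
      = 24 * t1 * s\<^sup>2 + 12 * (8 * K / (r - 1) + 4 * K) * (s\<^sup>2 * T powr a)"
    by (simp add: algebra_simps)
  also have "\<dots> \<le> 24 * t1 * s powr p + 12 * (8 * K / (r - 1) + 4 * K) * s powr p"
    unfolding sT using s2 t1p by (intro add_mono) auto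
  finally have C: "12 * s\<^sup>2 * (2 * t1 + 8 * K * (T powr a / (r - 1)) + 4 * K * T powr a)
      \<le> (24 * t1 + 12 * (8 * K / (r - 1) + 4 * K)) * s powr p" by (simp add: algebra_simps)
  show ?thesis using Q B C unfolding a_def r_def T_def by linarith
qed

lemma Q_eq2:
  fixes g :: "'a \<Rightarrow> real"
  assumes P: "prob_space mu" and g: "integrable mu g" and L1: "L1_norm mu g \<le> 1"
    and t1: "1 \<le> t1" and K: "0 \<le> K"
    and Hb: "\<And>t. t1 \<le> t \<Longrightarrow> Ht mu g t \<le> K * t powr (1 - p)"
    and s: "0 < s" "s \<le> 1 / (2 * t1)" "s \<le> exp (-1)" and p: "p = 2"
  shows "(\<integral>w. qf (s * g w) \<partial>mu) \<le> 12 * (2 * t1 + 8 * K / ln 2 + 4 * K) * (s\<^sup>2 * ln (1/s))"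
proof -
  obtain N where N1: "2^N * t1 \<le> 1/s" and Q: "(\<integral>w. qf (s * g w) \<partial>mu) \<le>
      12 * s\<^sup>2 * (2 * t1 + 8 * K * (\<Sum>j<N. (2^j * t1) powr (2 - p)) + 4 * K * ((1/s)/2) powr (2 - p))"
    using Q_general[OF P g L1 t1 K Hb s(1,2)] by blast
  have t1p: "0 < t1" using t1 by simp
  define T where "T = 1/s"
  have Tp: "0 < T" unfolding T_def using s by simp
  have S: "(\<Sum>j<N. (2^j * t1) powr (2 - p)) = real N" using p t1p by simp
  have T2: "((1/s)/2) powr (2 - p) = 1" using p s by simp
  have lnT: "1 \<le> ln T"
  proof -
    have "exp 1 \<le> T" unfolding T_def using s by (simp add: field_simps exp_minus)
    then show ?thesis using Tp by (metis ln_exp exp_gt_zero ln_le_cancel_iff)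
  qed
  have NT: "real N \<le> ln T / ln 2"
  proof -
    have "(2::real)^N * 1 \<le> 2^N * t1" using t1 by (intro mult_left_mono) auto
    then have "(2::real)^N \<le> T" using order_trans[OF _ N1, of "2^N"] unfolding T_def by simp
    then have "ln ((2::real)^N) \<le> ln T" using Tp by simp
    then have "real N * ln 2 \<le> ln T" by (simp add: ln_realpow)
    then show ?thesis by (simp add: field_simps)
  qed
  have "8 * K * real N \<le> 8 * K * (ln T / ln 2)" using NT K by (intro mult_left_mono) auto
  then have "2 * t1 + 8 * K * real N + 4 * K * 1 \<le> 2 * t1 + 8 * K * (ln T / ln 2) + 4 * K"
    by simp
  also have "\<dots> \<le> (2 * t1 + 8 * K / ln 2 + 4 * K) * ln T"
  proof -
    have "2 * t1 \<le> 2 * t1 * ln T" using lnT t1p by simp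
    moreover have "4 * K \<le> 4 * K * ln T" using lnT K by (simp add: mult_le_cancel_left1)
    ultimately show ?thesis by (simp add: algebra_simps)
  qed
  finally have B: "2 * t1 + 8 * K * real N + 4 * K * 1 \<le> (2 * t1 + 8 * K / ln 2 + 4 * K) * ln T" .
  have "12 * s\<^sup>2 * (2 * t1 + 8 * K * real N + 4 * K * 1) \<le> 12 * s\<^sup>2 * ((2 * t1 + 8 * K / ln 2 + 4 * K) * ln T)"
    using B by (intro mult_left_mono) auto
  with Q have "(\<integral>w. qf (s * g w) \<partial>mu) \<le> 12 * s\<^sup>2 * ((2 * t1 + 8 * K / ln 2 + 4 * K) * ln T)"
    unfolding S T2 by linarith
  also have "\<dots> = 12 * (2 * t1 + 8 * K / ln 2 + 4 * K) * (s\<^sup>2 * ln (1/s))"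
    unfolding T_def by (simp only: mult_ac)
  finally show ?thesis .
qed


lemma final_step:
  assumes P: "prob_space mu" and Xint: "X \<subseteq> {f. integrable mu f}"
    and s0: "0 < s0"
    and Qb: "\<And>g s. g \<in> X \<Longrightarrow> L1_norm mu g \<le> 1 \<Longrightarrow> 0 < s \<Longrightarrow> s \<le> s0 \<Longrightarrow> (\<integral>w. qf (s * g w) \<partial>mu) \<le> \<Phi> s"
    and ev2: "eventually (\<lambda>\<tau>. \<Phi> \<tau> + \<Phi> (1440 * \<tau>) \<le> \<tau>) (at_right 0)"
    and bnd: "eventually (\<lambda>\<tau>. 1152 * (\<Phi> \<tau> + \<Phi> (1440 * \<tau>)) \<le> B \<tau>) (at_right 0)"
  shows "eventually (\<lambda>\<tau>. rho_mod mu X \<tau> \<le> ereal (B \<tau>)) (at_right 0)"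
proof -
  have ev1: "eventually (\<lambda>\<tau>. 0 < \<tau> \<and> 1440 * \<tau> \<le> s0 \<and> \<tau> \<le> 1/2880) (at_right (0::real))"
    unfolding eventually_at_right_field
    by (rule exI[of _ "min (s0/1440) (1/2880)"]) (use s0 in auto)
  show ?thesis
    using ev1 ev2 bnd
  proof eventually_elim
    case (elim \<tau>)
    then have "rho_mod mu X \<tau> \<le> ereal (1152 * (\<Phi> \<tau> + \<Phi> (1440 * \<tau>)))"
      by (intro rho_generic[OF P Xint Qb]) auto
    also have "\<dots> \<le> ereal (B \<tau>)" using elim by simp
    finally show ?case .
  qed
qed

lemma tau_ln_lim: "((\<lambda>\<tau>::real. \<tau> * ln (1/\<tau>)) \<longlongrightarrow> 0) (at_right 0)"
  by real_asymp


lemma small_mult: assumes D: "0 \<le> (D::real)" and x: "x < 1/(D+1)" shows "D * x \<le> 1"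
proof (cases "x \<le> 0")
  case True
  have "D * x \<le> 0" by (rule mult_nonneg_nonpos[OF D True])
  then show ?thesis by simp
next
  case False
  have "D * x \<le> (D + 1) * x" using False by (simp add: algebra_simps)
  also have "\<dots> \<le> (D + 1) * (1/(D+1))" using x D by (intro mult_left_mono) auto
  also have "\<dots> = 1" using D by simp
  finally show ?thesis .
qed

theorem corollary1p4:
  fixes mu :: "'a measure" and X :: "('a \<Rightarrow> real) set" and p :: real
  assumes "prob_space mu"
    and "closed_L1_subspace mu X"
    and "p > 1"
    and "\<exists>C. eventually (\<lambda>t. G_fun mu X t \<le> ennreal (C / t powr (p - 1))) at_top"
  shows "(p > 2 \<longrightarrow> (\<exists>C. eventually (\<lambda>\<tau>. rho_mod mu X \<tau> \<le> ereal (C * \<tau>\<^sup>2)) (at_right 0)))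
       \<and> (p < 2 \<longrightarrow> (\<exists>C. eventually (\<lambda>\<tau>. rho_mod mu X \<tau> \<le> ereal (C * \<tau> powr p)) (at_right 0)))
       \<and> (p = 2 \<longrightarrow> (\<exists>C. eventually (\<lambda>\<tau>. rho_mod mu X \<tau> \<le> ereal (C * \<tau>\<^sup>2 * \<bar>ln \<tau>\<bar>)) (at_right 0)))"
proof -
  note P = assms(1)
  have Xint: "X \<subseteq> {f. integrable mu f}" using assms(2) unfolding closed_L1_subspace_def by auto
  obtain C where "eventually (\<lambda>t. G_fun mu X t \<le> ennreal (C / t powr (p - 1))) at_top"
    using assms(4) by blast
  then obtain t0 where t0: "\<And>t. t \<ge> t0 \<Longrightarrow> G_fun mu X t \<le> ennreal (C / t powr (p - 1))"
    unfolding eventually_at_top_linorder by blast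
  define t1 where "t1 = max t0 1"
  have t1: "1 \<le> t1" unfolding t1_def by simp
  have t1p: "0 < t1" using t1 by simp
  have hyp1: "\<And>t. t \<ge> t1 \<Longrightarrow> G_fun mu X t \<le> ennreal (C / t powr (p - 1))"
    using t0 unfolding t1_def by simp
  define K where "K = \<bar>C\<bar>"
  have K: "0 \<le> K" unfolding K_def by simp
  have Hb: "\<And>g t. g \<in> X \<Longrightarrow> L1_norm mu g \<le> 1 \<Longrightarrow> t1 \<le> t \<Longrightarrow> Ht mu g t \<le> K * t powr (1 - p)"
    unfolding K_def using H_from_G[OF P assms(2) hyp1 t1p] by blast
  have gi: "\<And>g. g \<in> X \<Longrightarrow> integrable mu g" using Xint by auto
  have s0p: "0 < 1 / (2 * t1)" using t1p by simp
  show ?thesis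
  proof (intro conjI impI)
    assume p2: "p > 2"
    define C2 where "C2 = 12 * (2 * t1 + 8 * K / (1 - 2 powr (2 - p)) + 4 * K)"
    have "2 powr (2 - p) < 1" using p2 by (intro powr_less_one) auto
    then have C2: "0 \<le> C2" unfolding C2_def using t1p K by simp
    define D where "D = C2 * (1 + 1440\<^sup>2)"
    have D: "0 \<le> D" unfolding D_def using C2 by simp
    have Qb: "\<And>g s. g \<in> X \<Longrightarrow> L1_norm mu g \<le> 1 \<Longrightarrow> 0 < s \<Longrightarrow> s \<le> 1 / (2 * t1) \<Longrightarrow> (\<integral>w. qf (s * g w) \<partial>mu) \<le> C2 * s\<^sup>2"
      unfolding C2_def by (rule Q_gt2[OF P gi _ t1 K Hb]) (use p2 in auto)
    have eq: "C2 * \<tau>\<^sup>2 + C2 * (1440 * \<tau>)\<^sup>2 = D * \<tau> * \<tau>" for \<tau> :: real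
      unfolding D_def by (simp add: power2_eq_square algebra_simps)
    have ev2: "eventually (\<lambda>\<tau>. C2 * \<tau>\<^sup>2 + C2 * (1440 * \<tau>)\<^sup>2 \<le> \<tau>) (at_right 0)"
      unfolding eventually_at_right_field
    proof (intro exI[of _ "1/(D+1)"] conjI allI impI)
      show "0 < 1/(D+1)" using D by simp
      fix \<tau> :: real assume "0 < \<tau>" "\<tau> < 1/(D+1)"
      then have "D * \<tau> \<le> 1" using small_mult[OF D] by auto
      then have "D * \<tau> * \<tau> \<le> 1 * \<tau>" using \<open>0 < \<tau>\<close> by (intro mult_right_mono) auto
      then show "C2 * \<tau>\<^sup>2 + C2 * (1440 * \<tau>)\<^sup>2 \<le> \<tau>" using eq by simp
    qed
    have bnd: "eventually (\<lambda>\<tau>. 1152 * (C2 * \<tau>\<^sup>2 + C2 * (1440 * \<tau>)\<^sup>2) \<le> (1152 * D) * \<tau>\<^sup>2) (at_right 0)"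
      by (intro always_eventually allI) (simp only: eq, simp add: power2_eq_square)
    show "\<exists>C. eventually (\<lambda>\<tau>. rho_mod mu X \<tau> \<le> ereal (C * \<tau>\<^sup>2)) (at_right 0)"
      using final_step[OF P Xint s0p Qb ev2 bnd] by blast
  next
    assume p2: "p < 2"
    define C3 where "C3 = 24 * t1 + 12 * (8 * K / (2 powr (2 - p) - 1) + 4 * K)"
    have "1 < 2 powr (2 - p)" using p2 by simp
    then have C3: "0 \<le> C3" unfolding C3_def using t1p K by simp
    define D where "D = C3 * (1 + 1440 powr p)"
    have D: "0 \<le> D" unfolding D_def using C3 by simp
    have Qb: "\<And>g s. g \<in> X \<Longrightarrow> L1_norm mu g \<le> 1 \<Longrightarrow> 0 < s \<Longrightarrow> s \<le> 1 / (2 * t1) \<Longrightarrow> (\<integral>w. qf (s * g w) \<partial>mu) \<le> C3 * s powr p"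
      unfolding C3_def by (rule Q_lt2[OF P gi _ t1 K Hb]) (use p2 assms(3) in auto)
    have eq: "C3 * \<tau> powr p + C3 * (1440 * \<tau>) powr p = D * \<tau> powr p" if "0 < \<tau>" for \<tau> :: real
      unfolding D_def using that by (simp add: powr_mult algebra_simps)
    have lim: "((\<lambda>\<tau>::real. \<tau> powr (p - 1)) \<longlongrightarrow> 0) (at_right 0)"
      by (rule tendsto_zero_powrI) (use assms(3) in \<open>auto intro!: tendsto_ident_at eventually_at_rightI[of 0 1]\<close>)
    have ev0: "eventually (\<lambda>\<tau>::real. \<tau> powr (p - 1) < 1/(D+1)) (at_right 0)"
      by (rule order_tendstoD(2)[OF lim]) (use D in simp)
    have evp: "eventually (\<lambda>\<tau>::real. 0 < \<tau>) (at_right 0)" by (simp add: eventually_at_right_less)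
    have ev2: "eventually (\<lambda>\<tau>. C3 * \<tau> powr p + C3 * (1440 * \<tau>) powr p \<le> \<tau>) (at_right 0)"
      using ev0 evp
    proof eventually_elim
      case (elim \<tau>)
      have "D * \<tau> powr (p - 1) \<le> 1" using small_mult[OF D elim(1)] .
      then have "D * \<tau> powr (p - 1) * \<tau> \<le> 1 * \<tau>" using elim(2) by (intro mult_right_mono) auto
      moreover have "\<tau> powr (p - 1) * \<tau> = \<tau> powr p"
      proof -
        have "\<tau> powr (p - 1) * \<tau> = \<tau> powr (p - 1) * \<tau> powr 1" using elim(2) by simp
        also have "\<dots> = \<tau> powr (p - 1 + 1)" by (rule powr_add[symmetric])
        finally show ?thesis by simp
      qed
      ultimately show ?case using eq[OF elim(2)] by (simp add: mult.assoc)
    qed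
    have bnd: "eventually (\<lambda>\<tau>. 1152 * (C3 * \<tau> powr p + C3 * (1440 * \<tau>) powr p) \<le> (1152 * D) * \<tau> powr p) (at_right 0)"
      using evp by eventually_elim (simp add: eq)
    show "\<exists>C. eventually (\<lambda>\<tau>. rho_mod mu X \<tau> \<le> ereal (C * \<tau> powr p)) (at_right 0)"
      using final_step[OF P Xint s0p Qb ev2 bnd] by blast
  next
    assume p2: "p = 2"
    define C4 where "C4 = 12 * (2 * t1 + 8 * K / ln 2 + 4 * K)"
    have C4: "0 \<le> C4" unfolding C4_def using t1p K by simp
    define D where "D = C4 * (1 + 1440\<^sup>2)"
    have D: "0 \<le> D" unfolding D_def using C4 by simp
    define s0 where "s0 = min (1 / (2 * t1)) (exp (-1))"
    have s0: "0 < s0" unfolding s0_def using t1p by simp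
    have Qb: "\<And>g s. g \<in> X \<Longrightarrow> L1_norm mu g \<le> 1 \<Longrightarrow> 0 < s \<Longrightarrow> s \<le> s0 \<Longrightarrow> (\<integral>w. qf (s * g w) \<partial>mu) \<le> C4 * (s\<^sup>2 * ln (1/s))"
      unfolding C4_def s0_def by (rule Q_eq2[OF P gi _ t1 K Hb]) (use p2 in auto)
    have le: "C4 * (\<tau>\<^sup>2 * ln (1/\<tau>)) + C4 * ((1440 * \<tau>)\<^sup>2 * ln (1/(1440 * \<tau>))) \<le> D * (\<tau> * ln (1/\<tau>)) * \<tau>"
      if "0 < \<tau>" for \<tau> :: real
    proof -
      have "ln (1/(1440 * \<tau>)) \<le> ln (1/\<tau>)" using that by (simp add: ln_div)
      then have "C4 * ((1440 * \<tau>)\<^sup>2 * ln (1/(1440 * \<tau>))) \<le> C4 * ((1440 * \<tau>)\<^sup>2 * ln (1/\<tau>))"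
        using C4 by (intro mult_left_mono) auto
      also have "\<dots> = C4 * 1440\<^sup>2 * (\<tau>\<^sup>2 * ln (1/\<tau>))" by (simp add: power_mult_distrib)
      finally show ?thesis unfolding D_def by (simp add: power2_eq_square algebra_simps)
    qed
    have ev0: "eventually (\<lambda>\<tau>::real. \<tau> * ln (1/\<tau>) < 1/(D+1)) (at_right 0)"
      by (rule order_tendstoD(2)[OF tau_ln_lim]) (use D in simp)
    have evp: "eventually (\<lambda>\<tau>::real. 0 < \<tau> \<and> \<tau> < 1) (at_right 0)"
      unfolding eventually_at_right_field by (rule exI[of _ 1]) auto
    have ev2: "eventually (\<lambda>\<tau>. C4 * (\<tau>\<^sup>2 * ln (1/\<tau>)) + C4 * ((1440 * \<tau>)\<^sup>2 * ln (1/(1440 * \<tau>))) \<le> \<tau>) (at_right 0)"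
      using ev0 evp
    proof eventually_elim
      case (elim \<tau>)
      have "D * (\<tau> * ln (1/\<tau>)) \<le> 1" using small_mult[OF D elim(1)] .
      then have "D * (\<tau> * ln (1/\<tau>)) * \<tau> \<le> 1 * \<tau>" using elim(2) by (intro mult_right_mono) auto
      then have A: "D * (\<tau> * ln (1/\<tau>)) * \<tau> \<le> \<tau>" by simp
      have "0 < \<tau>" using elim(2) by simp
      from order_trans[OF le[OF this] A] show ?case .
    qed
    have bnd: "eventually (\<lambda>\<tau>. 1152 * (C4 * (\<tau>\<^sup>2 * ln (1/\<tau>)) + C4 * ((1440 * \<tau>)\<^sup>2 * ln (1/(1440 * \<tau>)))) \<le> (1152 * D) * \<tau>\<^sup>2 * \<bar>ln \<tau>\<bar>) (at_right 0)"
      using evp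
    proof eventually_elim
      case (elim \<tau>)
      have "ln (1/\<tau>) = \<bar>ln \<tau>\<bar>" using elim by (simp add: ln_div)
      then have "D * (\<tau> * ln (1/\<tau>)) * \<tau> = D * \<tau>\<^sup>2 * \<bar>ln \<tau>\<bar>" by (simp add: power2_eq_square algebra_simps)
      then show ?case using le[of \<tau>] elim by simp
    qed
    show "\<exists>C. eventually (\<lambda>\<tau>. rho_mod mu X \<tau> \<le> ereal (C * \<tau>\<^sup>2 * \<bar>ln \<tau>\<bar>)) (at_right 0)"
      using final_step[OF P Xint s0 Qb ev2 bnd] by blast
  qed
qed


end
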